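(* Assume Assumptions 1, 2 and 3 hold and that the propensity score models $e_X(X;\alpha)$ and $e_W(X,W;\alpha,\gamma)$ are correctly specified. Then $$\Sigma^{\mathrm{eps}}_W(\delta^{\mathrm{eps}})\le\Sigma^{\mathrm{eps}}_X(\beta^{\mathrm{eps}})\le\Sigma^{\mathrm{fps}}_X(\beta^{\mathrm{fps}}),\qquad \Sigma^{\mathrm{eps}}_W(\delta^{\mathrm{eps}})\le\Sigma^{\mathrm{fps}}_W(\delta^{\mathrm{fps}})\le\Sigma^{\mathrm{fps}}_X(\beta^{\mathrm{fps}}).$$
   Context: Data: i.i.d. copies of $(Y,Z,X,W)$, binary $Z$, $Y=ZY_1+(1-Z)Y_0$, $\tau=E(Y_1-Y_0)$. Assumption 1: $Z\perp(Y_0,Y_1)\mid X$, $0<\Pr(Z=1\mid X)<1$. Assumption 2: $Z\perp(W,Y_0,Y_1)\mid X$. $e_0(X)=\Pr(Z=1\mid X)$. Propensity models $e_X(X;\alpha)$ and $e_W(X,W;\alpha,\gamma)$ with $e_W(X,W;\alpha,0)=e_X(X;\alpha)$; correct specification means $e_X(X;\alpha_0)=e_0(X)$, and then $e_W(X,W;\alpha_0,\gamma_0)=e_0(X)$ with $\gamma_0=0$. Scores: $S_\alpha(X,Z;\alpha)$ is the $\alpha$-score of $Z\log e_X+(1-Z)\log(1-e_X)$; $S_\alpha(X,W,Z;\alpha,\gamma)$, $S_\gamma(X,W,Z;\alpha,\gamma)$ are the $\alpha$- and $\gamma$-scores of $Z\log e_W+(1-Z)\log(1-e_W)$. Outcome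 working models $Q_X(X,z;\beta)$ and $Q_W(X,W,z;\delta)$. Assumption 3: either (i) for each $\beta$, $\delta=(\beta^T,0^T)^T$ satisfies $Q_W(X,W,z;\delta)=Q_X(X,z;\beta)$; or (ii) $Q_W(X,W,z;\delta_0)=E(Y\mid X,W,Z=z)$ for some $\delta_0$. Define $\varphi_X(Y,X,Z;\alpha,\beta)=\frac{ZY}{e_X}-\frac{(1-Z)Y}{1-e_X}-\frac{Z-e_X}{e_X}Q_X(X,1;\beta)+\frac{e_X-Z}{1-e_X}Q_X(X,0;\beta)-\tau$ with $e_X=e_X(X;\alpha)$, and $\varphi_W(Y,X,W,Z;\alpha,\gamma,\delta)$ likewise with $e_W(X,W;\alpha,\gamma)$ and $Q_W(X,W,z;\delta)$. Let $\mathcal H_{\alpha\alpha,0}=E(S_\alpha S_\alpha^T)$ at $\alpha_0$, $\mathcal D_X(\beta)=-E\{\partial\varphi_X(\cdot;\alpha_0,\beta)/\partial\alpha^T\}$; $\mathcal H_{W,0}=E\{(S_\alpha^T,S_\gamma^T)^T(S_\alpha^T,S_\gamma^T)\}$ at $(\alpha_0,\gamma_0)$, $\mathcal D_W(\delta)=-E\{\partial\varphi_W(\cdot;\alpha_0,\gamma_0,\delta)/\partial(\alpha^T,\gamma^T)\}$. Asymptotic variances: $\Sigma^{\mathrm{fps}}_X(\beta)=\mathrm{var}\{\varphi_X(\cdot;\alpha_0,\beta)\}$, $\Sigma^{\mathrm{eps}}_X(\beta)=\mathrm{var}\{\varphi_X(\cdot;\alpha_0,\beta)-\mathcal D_X(\beta)\mathcal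 H_{\alpha\alpha,0}^{-1}S_\alpha(X,Z;\alpha_0)\}$, $\Sigma^{\mathrm{fps}}_W(\delta)=\mathrm{var}\{\varphi_W(\cdot;\alpha_0,\gamma_0,\delta)\}$, $\Sigma^{\mathrm{eps}}_W(\delta)=\mathrm{var}\{\varphi_W(\cdot;\alpha_0,\gamma_0,\delta)-\mathcal D_W(\delta)\mathcal H_{W,0}^{-1}(S_\alpha^T,S_\gamma^T)^T\}$ (doubly robust estimators with known, resp. maximum-likelihood-estimated, propensity scores). $\beta^{\mathrm{fps}},\beta^{\mathrm{eps}},\delta^{\mathrm{fps}},\delta^{\mathrm{eps}}$ denote the minimizers of $\Sigma^{\mathrm{fps}}_X,\Sigma^{\mathrm{eps}}_X,\Sigma^{\mathrm{fps}}_W,\Sigma^{\mathrm{eps}}_W$, respectively. *)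

theory Defs
  imports "HOL-Probability.Probability"
begin

(* Gradient of a real-valued function on a Euclidean parameter space:
   the vector g with  f'(x) h = g \<bullet> h  (meaningful where f is differentiable). *)
definition gradient :: "('p::euclidean_space \<Rightarrow> real) \<Rightarrow> 'p \<Rightarrow> 'p" where
  "gradient f x = (SOME g. (f has_derivative (\<lambda>h. g \<bullet> h)) (at x))"

definition var_rv :: "'a measure \<Rightarrow> ('a \<Rightarrow> real) \<Rightarrow> real" where
  "var_rv M f = (\<integral>\<omega>. (f \<omega> - (\<integral>\<nu>. f \<nu> \<partial>M))\<^sup>2 \<partial>M)"

definition cond_exp_given :: "'a measure \<Rightarrow> ('a \<Rightarrow> 'b) \<Rightarrow> 'b measure \<Rightarrow> ('a \<Rightarrow> real) \<Rightarrow> 'a \<Rightarrow> real" where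
  "cond_exp_given M V N f = real_cond_exp M (vimage_algebra (space M) V N) f"

definition cond_indep :: "'a measure \<Rightarrow> ('a \<Rightarrow> 'b) \<Rightarrow> 'b measure \<Rightarrow> ('a \<Rightarrow> 'c) \<Rightarrow> 'c measure
    \<Rightarrow> ('a \<Rightarrow> 'd) \<Rightarrow> 'd measure \<Rightarrow> bool" where
  "cond_indep M A MA B MB V MV \<longleftrightarrow>
     (\<forall>SA\<in>sets MA. \<forall>SB\<in>sets MB. AE \<omega> in M.
        cond_exp_given M V MV (\<lambda>\<nu>. indicator SA (A \<nu>) * indicator SB (B \<nu>)) \<omega>
        = cond_exp_given M V MV (\<lambda>\<nu>. indicator SA (A \<nu>)) \<omega>
          * cond_exp_given M V MV (\<lambda>\<nu>. indicator SB (B \<nu>)) \<omega>)"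

definition prop_score :: "'a measure \<Rightarrow> ('a \<Rightarrow> 'x) \<Rightarrow> 'x measure \<Rightarrow> ('a \<Rightarrow> real) \<Rightarrow> 'a \<Rightarrow> real" where
  "prop_score M X MX Z = cond_exp_given M X MX (\<lambda>\<nu>. indicator {1::real} (Z \<nu>))"

definition loglik :: "real \<Rightarrow> real \<Rightarrow> real" where
  "loglik e z = z * ln e + (1 - z) * ln (1 - e)"

(* doubly robust influence function with propensity e, outcome predictions q1, q0 *)
definition phi :: "real \<Rightarrow> real \<Rightarrow> real \<Rightarrow> real \<Rightarrow> real \<Rightarrow> real \<Rightarrow> real" where
  "phi e q1 q0 z y \<tau> = z * y / e - (1 - z) * y / (1 - e) - (z - e) / e * q1 + (e - z) / (1 - e) * q0 - \<tau>"

definition ll_X :: "('x \<Rightarrow> 'p \<Rightarrow> real) \<Rightarrow> ('a \<Rightarrow> 'x) \<Rightarrow> ('a \<Rightarrow> real) \<Rightarrow> 'p \<Rightarrow> 'a \<Rightarrow> real" where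
  "ll_X eX X Z a \<omega> = loglik (eX (X \<omega>) a) (Z \<omega>)"

definition ll_W :: "('x \<Rightarrow> 'w \<Rightarrow> 'p \<Rightarrow> 'q \<Rightarrow> real) \<Rightarrow> ('a \<Rightarrow> 'x) \<Rightarrow> ('a \<Rightarrow> 'w) \<Rightarrow> ('a \<Rightarrow> real)
    \<Rightarrow> 'p \<times> 'q \<Rightarrow> 'a \<Rightarrow> real" where
  "ll_W eW X W Z \<theta> \<omega> = loglik (eW (X \<omega>) (W \<omega>) (fst \<theta>) (snd \<theta>)) (Z \<omega>)"

definition ate :: "'a measure \<Rightarrow> ('a \<Rightarrow> real) \<Rightarrow> ('a \<Rightarrow> real) \<Rightarrow> real" where
  "ate M Y0 Y1 = (\<integral>\<nu>. Y1 \<nu> - Y0 \<nu> \<partial>M)"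

(* varphi_X(Y,X,Z; alpha, beta), as a function of alpha for fixed beta *)
definition phi_X :: "'a measure \<Rightarrow> ('x \<Rightarrow> 'p \<Rightarrow> real) \<Rightarrow> ('x \<Rightarrow> real \<Rightarrow> 'b \<Rightarrow> real)
    \<Rightarrow> ('a \<Rightarrow> 'x) \<Rightarrow> ('a \<Rightarrow> real) \<Rightarrow> ('a \<Rightarrow> real) \<Rightarrow> ('a \<Rightarrow> real) \<Rightarrow> ('a \<Rightarrow> real)
    \<Rightarrow> 'b \<Rightarrow> 'p \<Rightarrow> 'a \<Rightarrow> real" where
  "phi_X M eX QX X Z Y Y0 Y1 \<beta> a \<omega> =
     phi (eX (X \<omega>) a) (QX (X \<omega>) 1 \<beta>) (QX (X \<omega>) 0 \<beta>) (Z \<omega>) (Y \<omega>) (ate M Y0 Y1)"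

(* varphi_W(Y,X,W,Z; alpha, gamma, delta), as a function of theta = (alpha,gamma) for fixed delta *)
definition phi_W :: "'a measure \<Rightarrow> ('x \<Rightarrow> 'w \<Rightarrow> 'p \<Rightarrow> 'q \<Rightarrow> real) \<Rightarrow> ('x \<Rightarrow> 'w \<Rightarrow> real \<Rightarrow> 'd \<Rightarrow> real)
    \<Rightarrow> ('a \<Rightarrow> 'x) \<Rightarrow> ('a \<Rightarrow> 'w) \<Rightarrow> ('a \<Rightarrow> real) \<Rightarrow> ('a \<Rightarrow> real) \<Rightarrow> ('a \<Rightarrow> real) \<Rightarrow> ('a \<Rightarrow> real)
    \<Rightarrow> 'd \<Rightarrow> 'p \<times> 'q \<Rightarrow> 'a \<Rightarrow> real" where
  "phi_W M eW QW X W Z Y Y0 Y1 \<delta> \<theta> \<omega> =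
     phi (eW (X \<omega>) (W \<omega>) (fst \<theta>) (snd \<theta>)) (QW (X \<omega>) (W \<omega>) 1 \<delta>) (QW (X \<omega>) (W \<omega>) 0 \<delta>)
         (Z \<omega>) (Y \<omega>) (ate M Y0 Y1)"

definition score :: "('p::euclidean_space \<Rightarrow> 'a \<Rightarrow> real) \<Rightarrow> 'p \<Rightarrow> 'a \<Rightarrow> 'p" where
  "score l \<theta>0 \<omega> = gradient (\<lambda>\<theta>. l \<theta> \<omega>) \<theta>0"

(* Fisher information H = E(S S^T), as the linear operator v \<mapsto> E(S (S^T v)) *)
definition fisher_info :: "'a measure \<Rightarrow> ('p::euclidean_space \<Rightarrow> 'a \<Rightarrow> real) \<Rightarrow> 'p \<Rightarrow> 'p \<Rightarrow> 'p" where
  "fisher_info M l \<theta>0 v = (\<integral>\<omega>. (score l \<theta>0 \<omega> \<bullet> v) *\<^sub>R score l \<theta>0 \<omega> \<partial>M)"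

(* D = - E(d varphi / d theta^T) at theta0, as a vector *)
definition Dmat :: "'a measure \<Rightarrow> ('p::euclidean_space \<Rightarrow> 'a \<Rightarrow> real) \<Rightarrow> 'p \<Rightarrow> 'p" where
  "Dmat M \<phi> \<theta>0 = - (\<integral>\<omega>. gradient (\<lambda>\<theta>. \<phi> \<theta> \<omega>) \<theta>0 \<partial>M)"

(* asymptotic variance with fixed (known) propensity score *)
definition Sigma_fps :: "'a measure \<Rightarrow> ('p \<Rightarrow> 'a \<Rightarrow> real) \<Rightarrow> 'p \<Rightarrow> real" where
  "Sigma_fps M \<phi> \<theta>0 = var_rv M (\<phi> \<theta>0)"

(* asymptotic variance with ML-estimated propensity score:
   var{ varphi - D H^{-1} S } *)
definition Sigma_eps :: "'a measure \<Rightarrow> ('p::euclidean_space \<Rightarrow> 'a \<Rightarrow> real) \<Rightarrow> ('p \<Rightarrow> 'a \<Rightarrow> real) \<Rightarrow> 'p \<Rightarrow> real" where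
  "Sigma_eps M \<phi> l \<theta>0 =
     var_rv M (\<lambda>\<omega>. \<phi> \<theta>0 \<omega> - Dmat M \<phi> \<theta>0 \<bullet> inv (fisher_info M l \<theta>0) (score l \<theta>0 \<omega>))"

end

theory Submission
  imports Defs
begin

lemma gradient_eqI:
  fixes f :: "'p::euclidean_space \<Rightarrow> real"
  assumes "(f has_derivative (\<lambda>h. g \<bullet> h)) (at x)"
  shows "gradient f x = g"
proof -
  have ex: "\<exists>g. (f has_derivative (\<lambda>h. g \<bullet> h)) (at x)" using assms by blast
  have "(f has_derivative (\<lambda>h. gradient f x \<bullet> h)) (at x)"
    unfolding gradient_def by (rule someI_ex[OF ex])
  then have "(\<lambda>h. gradient f x \<bullet> h) = (\<lambda>h. g \<bullet> h)" using assms by (rule has_derivative_unique)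
  then have "gradient f x \<bullet> (gradient f x - g) = g \<bullet> (gradient f x - g)" by metis
  then have "(gradient f x - g) \<bullet> (gradient f x - g) = 0" by (simp add: inner_diff_left)
  then show ?thesis by simp
qed

lemma linear_functional_repr:
  fixes f' :: "'p::euclidean_space \<Rightarrow> real"
  assumes "linear f'"
  shows "f' = (\<lambda>h. (\<Sum>b\<in>Basis. f' b *\<^sub>R b) \<bullet> h)"
proof
  fix h
  have "f' h = f' (\<Sum>b\<in>Basis. (h \<bullet> b) *\<^sub>R b)" by (simp add: euclidean_representation)
  also have "\<dots> = (\<Sum>b\<in>Basis. (h \<bullet> b) * f' b)"
    using assms by (simp add: linear_sum linear_scale)
  also have "\<dots> = (\<Sum>b\<in>Basis. f' b *\<^sub>R b) \<bullet> h"
    by (simp add: inner_sum_right inner_commute mult.commute)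
  finally show "f' h = (\<Sum>b\<in>Basis. f' b *\<^sub>R b) \<bullet> h" .
qed

lemma gradient_has_derivative:
  fixes f :: "'p::euclidean_space \<Rightarrow> real"
  assumes "f differentiable (at x)"
  shows "(f has_derivative (\<lambda>h. gradient f x \<bullet> h)) (at x)"
proof -
  obtain f' where d: "(f has_derivative f') (at x)" using assms by (auto simp: differentiable_def)
  then have "linear f'" using has_derivative_bounded_linear bounded_linear.linear by blast
  then have "f' = (\<lambda>h. (\<Sum>b\<in>Basis. f' b *\<^sub>R b) \<bullet> h)" by (rule linear_functional_repr)
  with d have d2: "(f has_derivative (\<lambda>h. (\<Sum>b\<in>Basis. f' b *\<^sub>R b) \<bullet> h)) (at x)" by simp
  then show ?thesis using gradient_eqI[OF d2] by simp
qed

lemma gradient_chain: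
  fixes f :: "'p::euclidean_space \<Rightarrow> real"
  assumes "(f has_derivative (\<lambda>h. g \<bullet> h)) (at x)"
    and "(\<phi> has_real_derivative d) (at (f x))"
  shows "((\<lambda>y. \<phi> (f y)) has_derivative (\<lambda>h. (d *\<^sub>R g) \<bullet> h)) (at x)"
proof -
  have "(\<phi> has_derivative (\<lambda>t. d * t)) (at (f x))"
    using assms(2) by (simp add: has_field_derivative_def)
  from has_derivative_compose[OF assms(1) this]
  show ?thesis by (simp add: algebra_simps)
qed

lemma gradient_dir_limit:
  fixes f :: "'p::euclidean_space \<Rightarrow> real"
  assumes "f differentiable (at a0)"
  shows "(\<lambda>n. (f (a0 + inverse (real (Suc n)) *\<^sub>R b) - f a0) * real (Suc n))
           \<longlonglongrightarrow> gradient f a0 \<bullet> b"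
proof -
  have d: "(f has_derivative (\<lambda>h. gradient f a0 \<bullet> h)) (at a0)"
    by (rule gradient_has_derivative[OF assms])
  have l: "((\<lambda>t::real. a0 + t *\<^sub>R b) has_derivative (\<lambda>t. t *\<^sub>R b)) (at 0)"
    by (auto intro!: derivative_eq_intros)
  have "((\<lambda>t. f (a0 + t *\<^sub>R b)) has_derivative (\<lambda>t. gradient f a0 \<bullet> (t *\<^sub>R b))) (at 0)"
  proof -
    have d': "(f has_derivative (\<lambda>h. gradient f a0 \<bullet> h)) (at ((\<lambda>t::real. a0 + t *\<^sub>R b) 0))"
      using d by simp
    show ?thesis using has_derivative_compose[OF l d'] by simp
  qed
  moreover have "(\<lambda>t. gradient f a0 \<bullet> (t *\<^sub>R b)) = (*) (gradient f a0 \<bullet> b)"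
    by (auto simp: fun_eq_iff)
  ultimately have "((\<lambda>t. f (a0 + t *\<^sub>R b)) has_real_derivative (gradient f a0 \<bullet> b)) (at 0)"
    by (simp add: has_field_derivative_def)
  then have lim: "((\<lambda>t. (f (a0 + t *\<^sub>R b) - f a0) / t) \<longlongrightarrow> gradient f a0 \<bullet> b) (at 0)"
    by (simp add: DERIV_def)
  have s: "filterlim (\<lambda>n. inverse (real (Suc n))) (at 0) sequentially"
    by (rule filterlim_atI) (use LIMSEQ_inverse_real_of_nat in auto)
  have "((\<lambda>n. (f (a0 + inverse (real (Suc n)) *\<^sub>R b) - f a0) / inverse (real (Suc n)))
          \<longlongrightarrow> gradient f a0 \<bullet> b) sequentially"
    using filterlim_compose[OF lim s] by (simp add: o_def)
  then show ?thesis by (simp add: divide_inverse)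
qed

lemma measurable_gradient:
  fixes f :: "'x \<Rightarrow> 'p::euclidean_space \<Rightarrow> real"
  assumes diff: "\<forall>x\<in>space N. f x differentiable (at a0)"
    and meas: "\<forall>a. (\<lambda>x. f x a) \<in> borel_measurable N"
  shows "(\<lambda>x. gradient (f x) a0) \<in> borel_measurable N"
proof -
  have comp: "(\<lambda>x. gradient (f x) a0 \<bullet> b) \<in> borel_measurable N" for b
  proof (rule borel_measurable_LIMSEQ_real)
    fix x assume "x \<in> space N"
    then show "(\<lambda>n. (f x (a0 + inverse (real (Suc n)) *\<^sub>R b) - f x a0) * real (Suc n))
           \<longlonglongrightarrow> gradient (f x) a0 \<bullet> b"
      using diff gradient_dir_limit by blast
  next
    fix n
    show "(\<lambda>x. (f x (a0 + inverse (real (Suc n)) *\<^sub>R b) - f x a0) * real (Suc n)) \<in> borel_measurable N"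
      using meas by (intro borel_measurable_times borel_measurable_diff) auto
  qed
  have "(\<lambda>x. \<Sum>b\<in>Basis. (gradient (f x) a0 \<bullet> b) *\<^sub>R b) \<in> borel_measurable N"
    using comp by (intro borel_measurable_sum borel_measurable_scaleR) auto
  then show ?thesis by (simp add: euclidean_representation)
qed

lemma l2_mult:
  fixes f g :: "'a \<Rightarrow> real"
  assumes "f \<in> borel_measurable M" "g \<in> borel_measurable M"
    "integrable M (\<lambda>x. (f x)\<^sup>2)" "integrable M (\<lambda>x. (g x)\<^sup>2)"
  shows "integrable M (\<lambda>x. f x * g x)"
proof -
  have i: "integrable M (\<lambda>x. (f x)\<^sup>2 + (g x)\<^sup>2)" using assms by auto
  have m: "(\<lambda>x. f x * g x) \<in> borel_measurable M" using assms by auto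
  have b: "AE x in M. norm (f x * g x) \<le> norm ((f x)\<^sup>2 + (g x)\<^sup>2)"
  proof (rule AE_I2)
    fix x
    have "2 * (\<bar>f x\<bar> * \<bar>g x\<bar>) \<le> (f x)\<^sup>2 + (g x)\<^sup>2"
      using sum_squares_bound[of "\<bar>f x\<bar>" "\<bar>g x\<bar>"] by (simp add: power2_abs mult.assoc)
    moreover have "\<bar>f x\<bar> * \<bar>g x\<bar> \<ge> 0" by simp
    ultimately have "\<bar>f x\<bar> * \<bar>g x\<bar> \<le> (f x)\<^sup>2 + (g x)\<^sup>2" by linarith
    then show "norm (f x * g x) \<le> norm ((f x)\<^sup>2 + (g x)\<^sup>2)"
      by (simp add: abs_mult)
  qed
  show ?thesis by (rule Bochner_Integration.integrable_bound[OF i m b])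
qed

lemma l2_integrable:
  fixes f :: "'a \<Rightarrow> real"
  assumes "prob_space M" "f \<in> borel_measurable M" "integrable M (\<lambda>x. (f x)\<^sup>2)"
  shows "integrable M f"
proof -
  interpret prob_space M by fact
  show ?thesis by (rule square_integrable_imp_integrable) (use assms in auto)
qed

lemma l2_add:
  fixes f g :: "'a \<Rightarrow> real"
  assumes "f \<in> borel_measurable M" "g \<in> borel_measurable M"
    "integrable M (\<lambda>x. (f x)\<^sup>2)" "integrable M (\<lambda>x. (g x)\<^sup>2)"
  shows "integrable M (\<lambda>x. (f x + g x)\<^sup>2)"
proof -
  have "integrable M (\<lambda>x. (f x)\<^sup>2 + (g x)\<^sup>2 + 2 * (f x * g x))"
    using assms l2_mult[OF assms] by auto
  then show ?thesis by (simp add: power2_sum mult.assoc)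
qed

lemma l2_scale:
  fixes f :: "'a \<Rightarrow> real"
  assumes "integrable M (\<lambda>x. (f x)\<^sup>2)"
  shows "integrable M (\<lambda>x. (c * f x)\<^sup>2)"
  using assms by (simp add: power_mult_distrib)

lemma var_rv_expand:
  fixes W :: "'a \<Rightarrow> real"
  assumes P: "prob_space M" and a: "integrable M W" "integrable M (\<lambda>x. (W x)\<^sup>2)"
  shows "var_rv M W = (\<integral>x. (W x)\<^sup>2 \<partial>M) - (\<integral>x. W x \<partial>M)\<^sup>2"
proof -
  interpret prob_space M by fact
  define w where "w = (\<integral>x. W x \<partial>M)"
  have pw: "\<And>x. (W x - w)\<^sup>2 = ((W x)\<^sup>2 - (2 * w) * W x) + w\<^sup>2"
    by (simp add: power2_eq_square algebra_simps)
  have i1: "integrable M (\<lambda>x. (2 * w) * W x)" using a by simp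
  have i2: "integrable M (\<lambda>x. (W x)\<^sup>2 - (2 * w) * W x)" using a i1 by simp
  have "var_rv M W = (\<integral>x. ((W x)\<^sup>2 - (2 * w) * W x) + w\<^sup>2 \<partial>M)"
    unfolding var_rv_def w_def[symmetric] pw ..
  also have "\<dots> = (\<integral>x. (W x)\<^sup>2 - (2 * w) * W x \<partial>M) + w\<^sup>2"
    using i2 by (subst Bochner_Integration.integral_add) (auto simp: prob_space)
  also have "(\<integral>x. (W x)\<^sup>2 - (2 * w) * W x \<partial>M) = (\<integral>x. (W x)\<^sup>2 \<partial>M) - (2 * w) * w"
    using a i1 by (subst Bochner_Integration.integral_diff) (auto simp: w_def)
  finally show ?thesis by (simp add: w_def power2_eq_square)
qed

lemma var_rv_add:
  fixes U V :: "'a \<Rightarrow> real"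
  assumes P: "prob_space M" and m: "U \<in> borel_measurable M" "V \<in> borel_measurable M"
    and sq: "integrable M (\<lambda>x. (U x)\<^sup>2)" "integrable M (\<lambda>x. (V x)\<^sup>2)"
    and unc: "(\<integral>x. U x * V x \<partial>M) = (\<integral>x. U x \<partial>M) * (\<integral>x. V x \<partial>M)"
  shows "var_rv M (\<lambda>x. U x + V x) = var_rv M U + var_rv M V"
proof -
  have iU: "integrable M U" by (rule l2_integrable[OF P m(1) sq(1)])
  have iV: "integrable M V" by (rule l2_integrable[OF P m(2) sq(2)])
  have iUV: "integrable M (\<lambda>x. U x * V x)" by (rule l2_mult[OF m sq])
  have sqUV: "integrable M (\<lambda>x. (U x + V x)\<^sup>2)" by (rule l2_add[OF m sq])
  have e1: "(\<integral>x. U x + V x \<partial>M) = (\<integral>x. U x \<partial>M) + (\<integral>x. V x \<partial>M)"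
    using iU iV by simp
  have e2: "(\<integral>x. (U x + V x)\<^sup>2 \<partial>M) = (\<integral>x. (U x)\<^sup>2 \<partial>M) + (\<integral>x. (V x)\<^sup>2 \<partial>M) + 2 * (\<integral>x. U x * V x \<partial>M)"
  proof -
    have pt: "\<And>x. (U x + V x)\<^sup>2 = ((U x)\<^sup>2 + (V x)\<^sup>2) + 2 * (U x * V x)"
      by (simp add: power2_eq_square algebra_simps)
    have "(\<integral>x. (U x + V x)\<^sup>2 \<partial>M) = (\<integral>x. ((U x)\<^sup>2 + (V x)\<^sup>2) + 2 * (U x * V x) \<partial>M)"
      by (simp only: pt)
    also have "\<dots> = (\<integral>x. (U x)\<^sup>2 + (V x)\<^sup>2 \<partial>M) + (\<integral>x. 2 * (U x * V x) \<partial>M)"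
      using sq iUV by (intro Bochner_Integration.integral_add) auto
    also have "\<dots> = (\<integral>x. (U x)\<^sup>2 \<partial>M) + (\<integral>x. (V x)\<^sup>2 \<partial>M) + 2 * (\<integral>x. U x * V x \<partial>M)"
      using sq iUV by simp
    finally show ?thesis .
  qed
  have "var_rv M (\<lambda>x. U x + V x) = (\<integral>x. (U x + V x)\<^sup>2 \<partial>M) - (\<integral>x. U x + V x \<partial>M)\<^sup>2"
    by (rule var_rv_expand[OF P]) (use iU iV sqUV in auto)
  also have "\<dots> = ((\<integral>x. (U x)\<^sup>2 \<partial>M) - (\<integral>x. U x \<partial>M)\<^sup>2) + ((\<integral>x. (V x)\<^sup>2 \<partial>M) - (\<integral>x. V x \<partial>M)\<^sup>2)"
    unfolding e1 e2 unc by (simp add: power2_eq_square algebra_simps)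
  also have "\<dots> = var_rv M U + var_rv M V"
    using var_rv_expand[OF P iU sq(1)] var_rv_expand[OF P iV sq(2)] by simp
  finally show ?thesis .
qed

lemma var_rv_nonneg: "var_rv M f \<ge> 0"
  unfolding var_rv_def by simp

lemma var_rv_AE_cong:
  fixes f g :: "'a \<Rightarrow> real"
  assumes "f \<in> borel_measurable M" "g \<in> borel_measurable M" "AE x in M. f x = g x"
  shows "var_rv M f = var_rv M g"
proof -
  have "(\<integral>x. f x \<partial>M) = (\<integral>x. g x \<partial>M)" using assms by (intro integral_cong_AE) auto
  moreover have "(\<integral>x. (f x - c)\<^sup>2 \<partial>M) = (\<integral>x. (g x - c)\<^sup>2 \<partial>M)" for c
    using assms by (intro integral_cong_AE) auto
  ultimately show ?thesis unfolding var_rv_def by simp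
qed

lemma inner_sq_integrable:
  fixes S :: "'a \<Rightarrow> 'p::euclidean_space"
  assumes Sm: "S \<in> borel_measurable M" and S2: "integrable M (\<lambda>x. (norm (S x))\<^sup>2)"
  shows "integrable M (\<lambda>x. (S x \<bullet> b)\<^sup>2)"
proof -
  have i: "integrable M (\<lambda>x. (norm b)\<^sup>2 * (norm (S x))\<^sup>2)" using S2 by simp
  have m: "(\<lambda>x. (S x \<bullet> b)\<^sup>2) \<in> borel_measurable M" using Sm by simp
  have "AE x in M. norm ((S x \<bullet> b)\<^sup>2) \<le> norm ((norm b)\<^sup>2 * (norm (S x))\<^sup>2)"
  proof (rule AE_I2)
    fix x
    have "\<bar>S x \<bullet> b\<bar> \<le> norm (S x) * norm b" by (rule Cauchy_Schwarz_ineq2)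
    then have "\<bar>S x \<bullet> b\<bar>\<^sup>2 \<le> (norm (S x) * norm b)\<^sup>2"
      by (intro power_mono) auto
    then show "norm ((S x \<bullet> b)\<^sup>2) \<le> norm ((norm b)\<^sup>2 * (norm (S x))\<^sup>2)"
      by (simp add: power_mult_distrib mult.commute)
  qed
  then show ?thesis by (rule Bochner_Integration.integrable_bound[OF i m])
qed

lemma proj_lemma:
  fixes S :: "'a \<Rightarrow> 'p::euclidean_space" and f :: "'a \<Rightarrow> real"
    and H :: "'p \<Rightarrow> 'p"
  assumes P: "prob_space M"
    and Sm: "S \<in> borel_measurable M" and S2: "integrable M (\<lambda>x. (norm (S x))\<^sup>2)"
    and S0: "\<And>b. (\<integral>x. S x \<bullet> b \<partial>M) = 0"
    and fm: "f \<in> borel_measurable M" and f2: "integrable M (\<lambda>x. (f x)\<^sup>2)"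
    and H: "H = (\<lambda>v. \<integral>x. (S x \<bullet> v) *\<^sub>R S x \<partial>M)"
    and Hb: "bij H"
    and D: "D = (\<integral>x. f x *\<^sub>R S x \<partial>M)"
  shows "var_rv M (\<lambda>x. f x - D \<bullet> inv H (S x)) \<le> var_rv M (\<lambda>x. f x - c \<bullet> S x)"
proof -
  have Sbm: "\<And>b. (\<lambda>x. S x \<bullet> b) \<in> borel_measurable M" using Sm by simp
  have Sb2: "\<And>b. integrable M (\<lambda>x. (S x \<bullet> b)\<^sup>2)" by (rule inner_sq_integrable[OF Sm S2])
  have iSS: "integrable M (\<lambda>x. (S x \<bullet> v) * (S x \<bullet> u))" for u v
    by (rule l2_mult[OF Sbm Sbm Sb2 Sb2])
  have iHv: "integrable M (\<lambda>x. (S x \<bullet> v) *\<^sub>R S x)" for v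
  proof -
    have i: "integrable M (\<lambda>x. norm v * (norm (S x))\<^sup>2)" using S2 by simp
    have m: "(\<lambda>x. (S x \<bullet> v) *\<^sub>R S x) \<in> borel_measurable M" using Sm by simp
    have "AE x in M. norm ((S x \<bullet> v) *\<^sub>R S x) \<le> norm (norm v * (norm (S x))\<^sup>2)"
    proof (rule AE_I2)
      fix x
      have "\<bar>S x \<bullet> v\<bar> \<le> norm (S x) * norm v" by (rule Cauchy_Schwarz_ineq2)
      then have "\<bar>S x \<bullet> v\<bar> * norm (S x) \<le> norm (S x) * norm v * norm (S x)"
        by (intro mult_right_mono) auto
      then show "norm ((S x \<bullet> v) *\<^sub>R S x) \<le> norm (norm v * (norm (S x))\<^sup>2)"
        by (simp add: power2_eq_square mult_ac)
    qed
    then show ?thesis by (rule Bochner_Integration.integrable_bound[OF i m])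
  qed
  have Hinner: "H v \<bullet> u = (\<integral>x. (S x \<bullet> v) * (S x \<bullet> u) \<partial>M)" for u v
  proof -
    have "H v \<bullet> u = (\<integral>x. ((S x \<bullet> v) *\<^sub>R S x) \<bullet> u \<partial>M)"
      unfolding H using iHv by (subst integral_inner_left) auto
    then show ?thesis by simp
  qed
  have Hsym: "H v \<bullet> u = H u \<bullet> v" for u v
    unfolding Hinner by (simp add: mult.commute)
  have nSm: "(\<lambda>x. norm (S x)) \<in> borel_measurable M" using Sm by simp
  have ifS: "integrable M (\<lambda>x. f x *\<^sub>R S x)"
  proof -
    have i: "integrable M (\<lambda>x. f x * norm (S x))" by (rule l2_mult[OF fm nSm f2 S2])
    have m: "(\<lambda>x. f x *\<^sub>R S x) \<in> borel_measurable M" using Sm fm by simp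
    have "AE x in M. norm (f x *\<^sub>R S x) \<le> norm (f x * norm (S x))"
      by (simp add: abs_mult)
    then show ?thesis by (rule Bochner_Integration.integrable_bound[OF i m])
  qed
  have Dinner: "D \<bullet> b = (\<integral>x. f x * (S x \<bullet> b) \<partial>M)" for b
  proof -
    have "D \<bullet> b = (\<integral>x. (f x *\<^sub>R S x) \<bullet> b \<partial>M)"
      unfolding D using ifS by (subst integral_inner_left) auto
    then show ?thesis by simp
  qed
  define a where "a = inv H D"
  have Ha: "H a = D" unfolding a_def using Hb by (simp add: bij_is_surj surj_f_inv_f)
  have Drep: "D \<bullet> inv H s = a \<bullet> s" for s
  proof -
    have "D \<bullet> inv H s = H a \<bullet> inv H s" by (simp add: Ha)
    also have "\<dots> = H (inv H s) \<bullet> a" by (rule Hsym)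
    also have "H (inv H s) = s" using Hb by (simp add: bij_is_surj surj_f_inv_f)
    finally show ?thesis by (simp add: inner_commute)
  qed
  define U where "U = (\<lambda>x. f x - S x \<bullet> a)"
  define V where "V = (\<lambda>x. S x \<bullet> (a - c))"
  have Um: "U \<in> borel_measurable M" unfolding U_def using fm Sbm by simp
  have Vm: "V \<in> borel_measurable M" unfolding V_def using Sbm by simp
  have U2: "integrable M (\<lambda>x. (U x)\<^sup>2)"
  proof -
    have "integrable M (\<lambda>x. (f x + (-1) * (S x \<bullet> a))\<^sup>2)"
      by (rule l2_add[OF fm _ f2 l2_scale[OF Sb2]]) (use Sbm in simp)
    then show ?thesis unfolding U_def by simp
  qed
  have V2: "integrable M (\<lambda>x. (V x)\<^sup>2)" unfolding V_def by (rule Sb2)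
  have intV: "(\<integral>x. V x \<partial>M) = 0" unfolding V_def by (rule S0)
  have intUV: "(\<integral>x. U x * V x \<partial>M) = 0"
  proof -
    have i1: "integrable M (\<lambda>x. f x * (S x \<bullet> (a - c)))" by (rule l2_mult[OF fm Sbm f2 Sb2])
    have "(\<integral>x. U x * V x \<partial>M) = (\<integral>x. f x * (S x \<bullet> (a - c)) - (S x \<bullet> a) * (S x \<bullet> (a - c)) \<partial>M)"
      unfolding U_def V_def by (simp add: algebra_simps)
    also have "\<dots> = (\<integral>x. f x * (S x \<bullet> (a - c)) \<partial>M) - (\<integral>x. (S x \<bullet> a) * (S x \<bullet> (a - c)) \<partial>M)"
      by (rule Bochner_Integration.integral_diff[OF i1 iSS])
    also have "\<dots> = D \<bullet> (a - c) - H a \<bullet> (a - c)" by (simp add: Dinner Hinner)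
    finally show ?thesis by (simp add: Ha)
  qed
  have "var_rv M (\<lambda>x. f x - D \<bullet> inv H (S x)) = var_rv M U"
    unfolding U_def Drep by (simp add: inner_commute)
  also have "\<dots> \<le> var_rv M U + var_rv M V" using var_rv_nonneg[of M V] by simp
  also have "\<dots> = var_rv M (\<lambda>x. U x + V x)"
    by (rule var_rv_add[OF P Um Vm U2 V2, symmetric]) (simp add: intUV intV)
  also have "(\<lambda>x. U x + V x) = (\<lambda>x. f x - c \<bullet> S x)"
    unfolding U_def V_def by (auto simp: inner_diff_right inner_commute)
  finally show ?thesis .
qed

lemma sfs_vimage:
  assumes P: "prob_space M" and V: "V \<in> measurable M N"
  shows "sigma_finite_subalgebra M (vimage_algebra (space M) V N)"
proof -
  interpret prob_space M by fact
  have "subalgebra M (vimage_algebra (space M) V N)"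
    unfolding subalgebra_def using sets_image_in_sets[OF refl V] by simp
  then have "finite_measure_subalgebra M (vimage_algebra (space M) V N)"
    unfolding finite_measure_subalgebra_def finite_measure_subalgebra_axioms_def
    using finite_measure_axioms by simp
  then show ?thesis by (rule finite_measure_subalgebra_is_sigma_finite)
qed

lemma meas_vimage_comp:
  assumes V: "V \<in> measurable M N" and H: "H \<in> borel_measurable N"
  shows "(\<lambda>x. H (V x)) \<in> borel_measurable (vimage_algebra (space M) V N)"
proof -
  have "V \<in> measurable (vimage_algebra (space M) V N) N"
    by (rule measurable_vimage_algebra1) (auto intro: measurable_space[OF V])
  then show ?thesis using H by (rule measurable_compose)
qed

lemma K_rect:
  fixes X :: "'a \<Rightarrow> 'x" and W :: "'a \<Rightarrow> 'w" and Z Y0 Y1 :: "'a \<Rightarrow> real" and E :: "'x \<Rightarrow> real"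
  assumes P: "prob_space M" and mX: "X \<in> measurable M MX" and mW: "W \<in> measurable M MW"
    and mZ: "Z \<in> borel_measurable M" and Zb: "\<forall>\<omega>\<in>space M. Z \<omega> = 0 \<or> Z \<omega> = 1"
    and CI: "cond_indep M Z borel (\<lambda>\<omega>. (W \<omega>, Y0 \<omega>, Y1 \<omega>)) (MW \<Otimes>\<^sub>M borel) X MX"
    and mE: "E \<in> borel_measurable MX"
    and Ecorr: "AE \<omega> in M. E (X \<omega>) = prop_score M X MX Z \<omega>"
    and A: "A \<in> sets MX" and B: "B \<in> sets MW"
  shows "(\<integral>\<omega>. Z \<omega> * (indicator A (X \<omega>) * indicator B (W \<omega>)) \<partial>M)
       = (\<integral>\<omega>. E (X \<omega>) * (indicator A (X \<omega>) * indicator B (W \<omega>)) \<partial>M)"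
proof -
  interpret prob_space M by fact
  define F where "F = vimage_algebra (space M) X MX"
  interpret sigma_finite_subalgebra M F unfolding F_def by (rule sfs_vimage[OF P mX])
  define iZ where "iZ = (\<lambda>\<omega>. indicator {1::real} (Z \<omega>) :: real)"
  define iB where "iB = (\<lambda>\<omega>. indicator B (W \<omega>) :: real)"
  define iA where "iA = (\<lambda>\<omega>. indicator A (X \<omega>) :: real)"
  have miZ: "iZ \<in> borel_measurable M" unfolding iZ_def using mZ by measurable
  have miB: "iB \<in> borel_measurable M" unfolding iB_def using mW B by measurable
  have miA: "iA \<in> borel_measurable M" unfolding iA_def using mX A by measurable
  have miAF: "iA \<in> borel_measurable F" unfolding iA_def F_def
    by (rule meas_vimage_comp[OF mX]) (use A in measurable)
  have ps: "prop_score M X MX Z = real_cond_exp M F iZ"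
    unfolding prop_score_def cond_exp_given_def F_def iZ_def ..
  have ci: "AE \<omega> in M. real_cond_exp M F (\<lambda>\<nu>. iZ \<nu> * iB \<nu>) \<omega>
                  = real_cond_exp M F iZ \<omega> * real_cond_exp M F iB \<omega>"
  proof -
    have SB: "B \<times> UNIV \<in> sets (MW \<Otimes>\<^sub>M (borel :: (real \<times> real) measure))"
      using B by (metis pair_measureI sets.top space_borel)
    have "{1::real} \<in> sets borel" by simp
    with CI SB have "AE \<omega> in M.
        cond_exp_given M X MX (\<lambda>\<nu>. indicator {1::real} (Z \<nu>) * indicator (B \<times> UNIV) (W \<nu>, Y0 \<nu>, Y1 \<nu>)) \<omega>
        = cond_exp_given M X MX (\<lambda>\<nu>. indicator {1::real} (Z \<nu>)) \<omega>
          * cond_exp_given M X MX (\<lambda>\<nu>. indicator (B \<times> UNIV) (W \<nu>, Y0 \<nu>, Y1 \<nu>)) \<omega>"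
      unfolding cond_indep_def by blast
    moreover have ind: "\<And>\<nu>. (indicator (B \<times> UNIV) (W \<nu>, Y0 \<nu>, Y1 \<nu>) :: real) = indicator B (W \<nu>)"
      by (auto simp: indicator_def)
    ultimately show ?thesis unfolding cond_exp_given_def F_def iZ_def iB_def
      by (simp only: ind)
  qed
  have bZ: "\<And>\<omega>. \<bar>iZ \<omega>\<bar> \<le> 1" and bB: "\<And>\<omega>. \<bar>iB \<omega>\<bar> \<le> 1" and bA: "\<And>\<omega>. \<bar>iA \<omega>\<bar> \<le> 1"
    unfolding iZ_def iB_def iA_def by (auto simp: indicator_def)
  have bounded_int: "integrable M f"
    if "f \<in> borel_measurable M" "\<And>\<omega>. \<bar>f \<omega>\<bar> \<le> (1::real)" for f :: "'a \<Rightarrow> real"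
    using that by (intro integrable_const_bound[where B=1]) auto
  have iCZ: "integrable M (real_cond_exp M F iZ)"
    by (rule real_cond_exp_int(1)) (rule bounded_int[OF miZ bZ])
  have "(\<integral>\<omega>. iA \<omega> * (iZ \<omega> * iB \<omega>) \<partial>M) = (\<integral>\<omega>. iA \<omega> * real_cond_exp M F (\<lambda>\<nu>. iZ \<nu> * iB \<nu>) \<omega> \<partial>M)"
  proof (rule real_cond_exp_intg(2)[symmetric])
    show "integrable M (\<lambda>x. iA x * (iZ x * iB x))"
    proof (rule bounded_int)
      show "(\<lambda>x. iA x * (iZ x * iB x)) \<in> borel_measurable M" using miA miZ miB by simp
      show "\<And>\<omega>. \<bar>iA \<omega> * (iZ \<omega> * iB \<omega>)\<bar> \<le> 1" by (simp add: iA_def iZ_def iB_def indicator_def)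
    qed
  qed (use miAF miZ miB in auto)
  also have "\<dots> = (\<integral>\<omega>. (iA \<omega> * real_cond_exp M F iZ \<omega>) * real_cond_exp M F iB \<omega> \<partial>M)"
    by (rule integral_cong_AE) (use ci miA miZ miB in auto)
  also have "\<dots> = (\<integral>\<omega>. (iA \<omega> * real_cond_exp M F iZ \<omega>) * iB \<omega> \<partial>M)"
  proof (rule real_cond_exp_intg(2))
    show "integrable M (\<lambda>x. (iA x * real_cond_exp M F iZ x) * iB x)"
    proof (rule Bochner_Integration.integrable_bound[OF iCZ])
      show "(\<lambda>x. (iA x * real_cond_exp M F iZ x) * iB x) \<in> borel_measurable M"
        using miA miB by simp
      show "AE x in M. norm (iA x * real_cond_exp M F iZ x * iB x) \<le> norm (real_cond_exp M F iZ x)"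
      proof (rule AE_I2)
        fix x
        have "\<bar>iA x\<bar> * \<bar>iB x\<bar> \<le> 1" using bA bB by (intro mult_le_one) auto
        then have "\<bar>iA x\<bar> * \<bar>iB x\<bar> * \<bar>real_cond_exp M F iZ x\<bar> \<le> \<bar>real_cond_exp M F iZ x\<bar>"
          by (simp add: mult_left_le_one_le)
        then show "norm (iA x * real_cond_exp M F iZ x * iB x) \<le> norm (real_cond_exp M F iZ x)"
          by (simp add: abs_mult mult_ac)
      qed
    qed
  qed (use miAF miB in auto)
  also have "\<dots> = (\<integral>\<omega>. E (X \<omega>) * (iA \<omega> * iB \<omega>) \<partial>M)"
  proof (rule integral_cong_AE)
    show "AE x in M. iA x * real_cond_exp M F iZ x * iB x = E (X x) * (iA x * iB x)"
      using Ecorr by eventually_elim (simp add: ps)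
  qed (use miA miB mX mE in auto)
  finally have eq: "(\<integral>\<omega>. iA \<omega> * (iZ \<omega> * iB \<omega>) \<partial>M) = (\<integral>\<omega>. E (X \<omega>) * (iA \<omega> * iB \<omega>) \<partial>M)" .
  have "(\<integral>\<omega>. Z \<omega> * (iA \<omega> * iB \<omega>) \<partial>M) = (\<integral>\<omega>. iA \<omega> * (iZ \<omega> * iB \<omega>) \<partial>M)"
  proof (rule Bochner_Integration.integral_cong[OF refl])
    fix \<omega> assume "\<omega> \<in> space M"
    then show "Z \<omega> * (iA \<omega> * iB \<omega>) = iA \<omega> * (iZ \<omega> * iB \<omega>)"
      using Zb unfolding iZ_def by (auto simp: indicator_def)
  qed
  with eq show ?thesis unfolding iA_def iB_def by simp
qed

lemma rect_emeasure:
  fixes w :: "'a \<Rightarrow> real"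
  assumes mX: "X \<in> measurable M MX" and mW: "W \<in> measurable M MW"
    and mw: "w \<in> borel_measurable M" and iw: "integrable M w" and pw: "AE \<omega> in M. 0 \<le> w \<omega>"
    and A: "A \<in> sets MX" and B: "B \<in> sets MW"
  shows "emeasure (distr (density M (\<lambda>\<omega>. ennreal (w \<omega>))) (MX \<Otimes>\<^sub>M MW) (\<lambda>\<omega>. (X \<omega>, W \<omega>))) (A \<times> B)
       = ennreal (\<integral>\<omega>. w \<omega> * (indicator A (X \<omega>) * indicator B (W \<omega>)) \<partial>M)"
proof -
  have mXW: "(\<lambda>\<omega>. (X \<omega>, W \<omega>)) \<in> measurable M (MX \<Otimes>\<^sub>M MW)" using mX mW by measurable
  have AB: "A \<times> B \<in> sets (MX \<Otimes>\<^sub>M MW)" using A B by (rule pair_measureI)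
  have pre: "(\<lambda>\<omega>. (X \<omega>, W \<omega>)) -` (A \<times> B) \<inter> space M \<in> sets M"
    using measurable_sets[OF mXW AB] .
  have ii: "integrable M (\<lambda>\<omega>. w \<omega> * (indicator A (X \<omega>) * indicator B (W \<omega>)))"
  proof (rule Bochner_Integration.integrable_bound[OF iw])
    show "(\<lambda>\<omega>. w \<omega> * (indicator A (X \<omega>) * indicator B (W \<omega>))) \<in> borel_measurable M"
      using mw mX mW A B by measurable
    show "AE x in M. norm (w x * (indicator A (X x) * indicator B (W x))) \<le> norm (w x)"
      by (auto simp: indicator_def)
  qed
  have "emeasure (distr (density M (\<lambda>\<omega>. ennreal (w \<omega>))) (MX \<Otimes>\<^sub>M MW) (\<lambda>\<omega>. (X \<omega>, W \<omega>))) (A \<times> B)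
      = emeasure (density M (\<lambda>\<omega>. ennreal (w \<omega>))) ((\<lambda>\<omega>. (X \<omega>, W \<omega>)) -` (A \<times> B) \<inter> space M)"
    by (subst emeasure_distr) (use mXW AB in auto)
  also have "\<dots> = (\<integral>\<^sup>+ \<omega>. ennreal (w \<omega>) * indicator ((\<lambda>\<omega>. (X \<omega>, W \<omega>)) -` (A \<times> B) \<inter> space M) \<omega> \<partial>M)"
    by (rule emeasure_density) (use mw pre in auto)
  also have "\<dots> = (\<integral>\<^sup>+ \<omega>. ennreal (w \<omega> * (indicator A (X \<omega>) * indicator B (W \<omega>))) \<partial>M)"
    by (rule nn_integral_cong) (auto simp: indicator_def)
  also have "\<dots> = ennreal (\<integral>\<omega>. w \<omega> * (indicator A (X \<omega>) * indicator B (W \<omega>)) \<partial>M)"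
    by (rule nn_integral_eq_integral[OF ii]) (use pw in \<open>auto simp: indicator_def\<close>)
  finally show ?thesis .
qed

lemma K_int_eq:
  fixes X :: "'a \<Rightarrow> 'x" and W :: "'a \<Rightarrow> 'w" and Z Y0 Y1 :: "'a \<Rightarrow> real" and E :: "'x \<Rightarrow> real"
  assumes P: "prob_space M" and mX: "X \<in> measurable M MX" and mW: "W \<in> measurable M MW"
    and mZ: "Z \<in> borel_measurable M" and Zb: "\<forall>\<omega>\<in>space M. Z \<omega> = 0 \<or> Z \<omega> = 1"
    and CI: "cond_indep M Z borel (\<lambda>\<omega>. (W \<omega>, Y0 \<omega>, Y1 \<omega>)) (MW \<Otimes>\<^sub>M borel) X MX"
    and mE: "E \<in> borel_measurable MX"
    and Ecorr: "AE \<omega> in M. E (X \<omega>) = prop_score M X MX Z \<omega>"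
    and Epos: "AE \<omega> in M. 0 \<le> E (X \<omega>)"
    and mG: "G \<in> borel_measurable (MX \<Otimes>\<^sub>M MW)"
  shows "(\<integral>\<omega>. Z \<omega> * G (X \<omega>, W \<omega>) \<partial>M) = (\<integral>\<omega>. E (X \<omega>) * G (X \<omega>, W \<omega>) \<partial>M)"
proof -
  interpret prob_space M by fact
  define F where "F = vimage_algebra (space M) X MX"
  interpret sigma_finite_subalgebra M F unfolding F_def by (rule sfs_vimage[OF P mX])
  have mXW: "(\<lambda>\<omega>. (X \<omega>, W \<omega>)) \<in> measurable M (MX \<Otimes>\<^sub>M MW)" using mX mW by measurable
  have mEX: "(\<lambda>\<omega>. E (X \<omega>)) \<in> borel_measurable M" using mE mX by measurable
  have iZ: "integrable M Z"
  proof (rule integrable_const_bound[where B=1])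
    show "AE x in M. norm (Z x) \<le> 1" using Zb by (intro AE_I2) auto
  qed (use mZ in auto)
  have iE: "integrable M (\<lambda>\<omega>. E (X \<omega>))"
  proof -
    have "integrable M (prop_score M X MX Z)"
      unfolding prop_score_def cond_exp_given_def F_def[symmetric]
      by (rule real_cond_exp_int(1), rule integrable_const_bound[where B=1]) (use mZ in auto)
    then show ?thesis
      by (rule integrable_cong_AE_imp[OF _ mEX]) (use Ecorr in \<open>auto elim: AE_mp\<close>)
  qed
  have pZ: "AE \<omega> in M. 0 \<le> Z \<omega>" using Zb by (auto intro!: AE_I2)
  define \<nu>1 where "\<nu>1 = distr (density M (\<lambda>\<omega>. ennreal (Z \<omega>))) (MX \<Otimes>\<^sub>M MW) (\<lambda>\<omega>. (X \<omega>, W \<omega>))"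
  define \<nu>2 where "\<nu>2 = distr (density M (\<lambda>\<omega>. ennreal (E (X \<omega>)))) (MX \<Otimes>\<^sub>M MW) (\<lambda>\<omega>. (X \<omega>, W \<omega>))"
  have rect: "emeasure \<nu>1 (A \<times> B) = emeasure \<nu>2 (A \<times> B)" if "A \<in> sets MX" "B \<in> sets MW" for A B
  proof -
    have "emeasure \<nu>1 (A \<times> B) = ennreal (\<integral>\<omega>. Z \<omega> * (indicator A (X \<omega>) * indicator B (W \<omega>)) \<partial>M)"
      unfolding \<nu>1_def by (rule rect_emeasure[OF mX mW mZ iZ pZ that])
    also have "\<dots> = ennreal (\<integral>\<omega>. E (X \<omega>) * (indicator A (X \<omega>) * indicator B (W \<omega>)) \<partial>M)"
      using K_rect[OF P mX mW mZ Zb CI mE Ecorr that] by simp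
    also have "\<dots> = emeasure \<nu>2 (A \<times> B)"
      unfolding \<nu>2_def by (rule rect_emeasure[OF mX mW mEX iE Epos that, symmetric])
    finally show ?thesis .
  qed
  have "\<nu>1 = \<nu>2"
  proof (rule measure_eqI_generator_eq[where \<Omega>="space MX \<times> space MW"
        and E="{a \<times> b | a b. a \<in> sets MX \<and> b \<in> sets MW}" and A="\<lambda>_. space MX \<times> space MW"])
    show "Int_stable {a \<times> b | a b. a \<in> sets MX \<and> b \<in> sets MW}"
      by (rule Int_stable_pair_measure_generator)
    show "{a \<times> b | a b. a \<in> sets MX \<and> b \<in> sets MW} \<subseteq> Pow (space MX \<times> space MW)"
      by (auto dest: sets.sets_into_space)
    show "\<And>X. X \<in> {a \<times> b | a b. a \<in> sets MX \<and> b \<in> sets MW} \<Longrightarrow> emeasure \<nu>1 X = emeasure \<nu>2 X"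
      using rect by blast
    show "sets \<nu>1 = sigma_sets (space MX \<times> space MW) {a \<times> b | a b. a \<in> sets MX \<and> b \<in> sets MW}"
      unfolding \<nu>1_def by (simp add: sets_pair_measure)
    show "sets \<nu>2 = sigma_sets (space MX \<times> space MW) {a \<times> b | a b. a \<in> sets MX \<and> b \<in> sets MW}"
      unfolding \<nu>2_def by (simp add: sets_pair_measure)
    show "range (\<lambda>_. space MX \<times> space MW) \<subseteq> {a \<times> b | a b. a \<in> sets MX \<and> b \<in> sets MW}"
      by auto
    show "(\<Union>i. space MX \<times> space MW) = space MX \<times> space MW" by simp
    show "\<And>i. emeasure \<nu>1 (space MX \<times> space MW) \<noteq> \<infinity>"
      unfolding \<nu>1_def by (subst rect_emeasure[OF mX mW mZ iZ pZ]) auto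
  qed
  have "(\<integral>\<omega>. Z \<omega> * G (X \<omega>, W \<omega>) \<partial>M) = integral\<^sup>L \<nu>1 G"
    unfolding \<nu>1_def
    by (subst integral_distr) (use mXW mG mZ pZ in \<open>auto simp: integral_density\<close>)
  also have "\<dots> = integral\<^sup>L \<nu>2 G" by (simp add: \<open>\<nu>1 = \<nu>2\<close>)
  also have "\<dots> = (\<integral>\<omega>. E (X \<omega>) * G (X \<omega>, W \<omega>) \<partial>M)"
    unfolding \<nu>2_def
    by (subst integral_distr) (use mXW mG mEX Epos in \<open>auto simp: integral_density\<close>)
  finally show ?thesis .
qed

lemma trunc_tendsto: "(\<lambda>n. max (-(real n)) (min (real n) (g::real))) \<longlonglongrightarrow> g"
proof (rule tendsto_eventually)
  show "\<forall>\<^sub>F n in sequentially. max (-(real n)) (min (real n) g) = g"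
  proof (rule eventually_sequentiallyI[where c="nat \<lceil>\<bar>g\<bar>\<rceil>"])
    fix n assume "nat \<lceil>\<bar>g\<bar>\<rceil> \<le> n"
    then have "\<bar>g\<bar> \<le> real n" by simp
    then show "max (-(real n)) (min (real n) g) = g" by auto
  qed
qed

lemma trunc_abs: "\<bar>max (-(real n)) (min (real n) (g::real))\<bar> \<le> \<bar>g\<bar>" by auto
lemma trunc_bound: "\<bar>max (-(real n)) (min (real n) (g::real))\<bar> \<le> real n" by auto

lemma K_orth:
  fixes X :: "'a \<Rightarrow> 'x" and W :: "'a \<Rightarrow> 'w" and Z Y0 Y1 :: "'a \<Rightarrow> real" and E :: "'x \<Rightarrow> real"
  assumes P: "prob_space M" and mX: "X \<in> measurable M MX" and mW: "W \<in> measurable M MW"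
    and mZ: "Z \<in> borel_measurable M" and Zb: "\<forall>\<omega>\<in>space M. Z \<omega> = 0 \<or> Z \<omega> = 1"
    and CI: "cond_indep M Z borel (\<lambda>\<omega>. (W \<omega>, Y0 \<omega>, Y1 \<omega>)) (MW \<Otimes>\<^sub>M borel) X MX"
    and mE: "E \<in> borel_measurable MX"
    and Ecorr: "AE \<omega> in M. E (X \<omega>) = prop_score M X MX Z \<omega>"
    and Epos: "AE \<omega> in M. 0 \<le> E (X \<omega>)"
    and mG: "G \<in> borel_measurable (MX \<Otimes>\<^sub>M MW)"
    and iG: "integrable M (\<lambda>\<omega>. (Z \<omega> - E (X \<omega>)) * G (X \<omega>, W \<omega>))"
  shows "(\<integral>\<omega>. (Z \<omega> - E (X \<omega>)) * G (X \<omega>, W \<omega>) \<partial>M) = 0"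
proof -
  interpret prob_space M by fact
  define F where "F = vimage_algebra (space M) X MX"
  interpret sigma_finite_subalgebra M F unfolding F_def by (rule sfs_vimage[OF P mX])
  have mEX: "(\<lambda>\<omega>. E (X \<omega>)) \<in> borel_measurable M" using mE mX by measurable
  have iZ: "integrable M Z"
  proof (rule integrable_const_bound[where B=1])
    show "AE x in M. norm (Z x) \<le> 1" using Zb by (intro AE_I2) auto
  qed (use mZ in auto)
  have iE: "integrable M (\<lambda>\<omega>. E (X \<omega>))"
  proof -
    have "integrable M (prop_score M X MX Z)"
      unfolding prop_score_def cond_exp_given_def F_def[symmetric]
      by (rule real_cond_exp_int(1), rule integrable_const_bound[where B=1]) (use mZ in auto)
    then show ?thesis
      by (rule integrable_cong_AE_imp[OF _ mEX]) (use Ecorr in \<open>auto elim: AE_mp\<close>)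
  qed
  define Gn where "Gn = (\<lambda>n p. max (-(real n)) (min (real n) (G p)))"
  have mGn: "\<And>n. Gn n \<in> borel_measurable (MX \<Otimes>\<^sub>M MW)" unfolding Gn_def using mG by measurable
  have mGnXW: "\<And>n. (\<lambda>\<omega>. Gn n (X \<omega>, W \<omega>)) \<in> borel_measurable M"
    using mGn mX mW by measurable
  have zero: "(\<integral>\<omega>. (Z \<omega> - E (X \<omega>)) * Gn n (X \<omega>, W \<omega>) \<partial>M) = 0" for n
  proof -
    have i1: "integrable M (\<lambda>\<omega>. Z \<omega> * Gn n (X \<omega>, W \<omega>))"
    proof (rule Bochner_Integration.integrable_bound[where f="\<lambda>\<omega>. real n * Z \<omega>"])
      show "integrable M (\<lambda>\<omega>. real n * Z \<omega>)" using iZ by simp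
      show "(\<lambda>\<omega>. Z \<omega> * Gn n (X \<omega>, W \<omega>)) \<in> borel_measurable M" using mZ mGnXW by simp
      show "AE x in M. norm (Z x * Gn n (X x, W x)) \<le> norm (real n * Z x)"
      proof (rule AE_I2)
        fix x assume "x \<in> space M"
        then have "Z x = 0 \<or> Z x = 1" using Zb by auto
        then show "norm (Z x * Gn n (X x, W x)) \<le> norm (real n * Z x)"
          using trunc_bound[of n "G (X x, W x)"] unfolding Gn_def by auto
      qed
    qed
    have i2: "integrable M (\<lambda>\<omega>. E (X \<omega>) * Gn n (X \<omega>, W \<omega>))"
    proof (rule Bochner_Integration.integrable_bound[where f="\<lambda>\<omega>. real n * E (X \<omega>)"])
      show "integrable M (\<lambda>\<omega>. real n * E (X \<omega>))" using iE by simp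
      show "(\<lambda>\<omega>. E (X \<omega>) * Gn n (X \<omega>, W \<omega>)) \<in> borel_measurable M" using mEX mGnXW by simp
      show "AE x in M. norm (E (X x) * Gn n (X x, W x)) \<le> norm (real n * E (X x))"
      proof (rule AE_I2)
        fix x
        have "\<bar>E (X x)\<bar> * \<bar>Gn n (X x, W x)\<bar> \<le> \<bar>E (X x)\<bar> * real n"
          using trunc_bound[of n "G (X x, W x)"] unfolding Gn_def by (intro mult_left_mono) auto
        then show "norm (E (X x) * Gn n (X x, W x)) \<le> norm (real n * E (X x))"
          by (simp add: abs_mult mult.commute)
      qed
    qed
    have "(\<integral>\<omega>. (Z \<omega> - E (X \<omega>)) * Gn n (X \<omega>, W \<omega>) \<partial>M)
        = (\<integral>\<omega>. Z \<omega> * Gn n (X \<omega>, W \<omega>) - E (X \<omega>) * Gn n (X \<omega>, W \<omega>) \<partial>M)"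
      by (simp add: left_diff_distrib)
    also have "\<dots> = (\<integral>\<omega>. Z \<omega> * Gn n (X \<omega>, W \<omega>) \<partial>M) - (\<integral>\<omega>. E (X \<omega>) * Gn n (X \<omega>, W \<omega>) \<partial>M)"
      by (rule Bochner_Integration.integral_diff[OF i1 i2])
    also have "\<dots> = 0"
      using K_int_eq[OF P mX mW mZ Zb CI mE Ecorr Epos mGn] by simp
    finally show ?thesis .
  qed
  have lim: "(\<lambda>n. \<integral>\<omega>. (Z \<omega> - E (X \<omega>)) * Gn n (X \<omega>, W \<omega>) \<partial>M)
      \<longlonglongrightarrow> (\<integral>\<omega>. (Z \<omega> - E (X \<omega>)) * G (X \<omega>, W \<omega>) \<partial>M)"
  proof (rule integral_dominated_convergence[where w="\<lambda>\<omega>. norm ((Z \<omega> - E (X \<omega>)) * G (X \<omega>, W \<omega>))"])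
    show "(\<lambda>\<omega>. (Z \<omega> - E (X \<omega>)) * G (X \<omega>, W \<omega>)) \<in> borel_measurable M"
      using iG by auto
    show "\<And>n. (\<lambda>\<omega>. (Z \<omega> - E (X \<omega>)) * Gn n (X \<omega>, W \<omega>)) \<in> borel_measurable M"
      using mZ mEX mGnXW by simp
    show "integrable M (\<lambda>\<omega>. norm ((Z \<omega> - E (X \<omega>)) * G (X \<omega>, W \<omega>)))"
      using iG by (rule integrable_norm)
    show "AE x in M. (\<lambda>n. (Z x - E (X x)) * Gn n (X x, W x)) \<longlonglongrightarrow> (Z x - E (X x)) * G (X x, W x)"
      unfolding Gn_def by (intro AE_I2 tendsto_mult_left trunc_tendsto)
    show "\<And>n. AE x in M. norm ((Z x - E (X x)) * Gn n (X x, W x)) \<le> norm ((Z x - E (X x)) * G (X x, W x))"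
      unfolding Gn_def by (intro AE_I2) (simp add: abs_mult mult_left_mono)
  qed
  have "(\<lambda>n. \<integral>\<omega>. (Z \<omega> - E (X \<omega>)) * Gn n (X \<omega>, W \<omega>) \<partial>M) = (\<lambda>n. 0)"
    using zero by (intro ext) blast
  with lim have "(\<lambda>n. 0::real) \<longlonglongrightarrow> (\<integral>\<omega>. (Z \<omega> - E (X \<omega>)) * G (X \<omega>, W \<omega>) \<partial>M)"
    by simp
  then show ?thesis by (rule LIMSEQ_unique[OF tendsto_const, symmetric])
qed

lemma DERIV_ln_nz:
  fixes x :: real
  assumes "x \<noteq> 0"
  shows "(ln has_real_derivative inverse x) (at x)"
proof (cases "x > 0")
  case True
  then show ?thesis by (rule DERIV_ln)
next
  case False
  with assms have xn: "x < 0" by simp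
  have "((\<lambda>t. ln (- t)) has_real_derivative inverse (- x) * (- 1)) (at x)"
    by (rule DERIV_chain2[OF DERIV_ln]) (use xn in \<open>auto intro!: derivative_eq_intros\<close>)
  moreover have "(\<lambda>t::real. ln (- t)) = ln" proof (intro ext) fix t :: real show "ln (- t) = ln t" using ln_minus[of t] by simp qed
  ultimately show ?thesis by simp
qed

lemma phi_deriv:
  fixes e :: real
  assumes e0: "e \<noteq> 0" and e1: "e \<noteq> 1"
  shows "((\<lambda>t. phi t q1 q0 z y \<tau>) has_real_derivative
           (- (z * (y - q1)) / e\<^sup>2 - (1 - z) * (y - q0) / (1 - e)\<^sup>2)) (at e)"
proof -
  have e1': "1 - e \<noteq> 0" using e1 by simp
  have dI: "((\<lambda>t::real. t) has_real_derivative 1) (at e)" by (rule DERIV_ident)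
  have dC: "\<And>c. ((\<lambda>t::real. c) has_real_derivative 0) (at e)" by (rule DERIV_const)
  have dM: "((\<lambda>t::real. 1 - t) has_real_derivative 0 - 1) (at e)" by (rule DERIV_diff[OF dC dI])
  have dZ: "((\<lambda>t::real. z - t) has_real_derivative 0 - 1) (at e)" by (rule DERIV_diff[OF dC dI])
  have dZ2: "((\<lambda>t::real. t - z) has_real_derivative 1 - 0) (at e)" by (rule DERIV_diff[OF dI dC])
  have d1: "((\<lambda>t. z * y / t) has_real_derivative (0 * e - z * y * 1) / (e * e)) (at e)"
    by (rule DERIV_divide[OF dC dI e0])
  have d2: "((\<lambda>t. (1 - z) * y / (1 - t)) has_real_derivative (0 * (1 - e) - (1 - z) * y * (0 - 1)) / ((1 - e) * (1 - e))) (at e)"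
    by (rule DERIV_divide[OF dC dM e1'])
  have d3: "((\<lambda>t. (z - t) / t * q1) has_real_derivative ((0 - 1) * e - (z - e) * 1) / (e * e) * q1) (at e)"
    by (rule DERIV_cmult_right[OF DERIV_divide[OF dZ dI e0]])
  have d4: "((\<lambda>t. (t - z) / (1 - t) * q0) has_real_derivative ((1 - 0) * (1 - e) - (e - z) * (0 - 1)) / ((1 - e) * (1 - e)) * q0) (at e)"
    by (rule DERIV_cmult_right[OF DERIV_divide[OF dZ2 dM e1']])
  have "((\<lambda>t. phi t q1 q0 z y \<tau>) has_real_derivative
     (0 * e - z * y * 1) / (e * e) - (0 * (1 - e) - (1 - z) * y * (0 - 1)) / ((1 - e) * (1 - e))
     - ((0 - 1) * e - (z - e) * 1) / (e * e) * q1 + ((1 - 0) * (1 - e) - (e - z) * (0 - 1)) / ((1 - e) * (1 - e)) * q0 - 0) (at e)"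
    unfolding phi_def by (intro DERIV_diff DERIV_add d1 d2 d3 d4 dC)
  moreover have "(0 * e - z * y * 1) / (e * e) - (0 * (1 - e) - (1 - z) * y * (0 - 1)) / ((1 - e) * (1 - e))
     - ((0 - 1) * e - (z - e) * 1) / (e * e) * q1 + ((1 - 0) * (1 - e) - (e - z) * (0 - 1)) / ((1 - e) * (1 - e)) * q0 - 0
     = - (z * (y - q1)) / e\<^sup>2 - (1 - z) * (y - q0) / (1 - e)\<^sup>2"
    by (simp add: divide_inverse algebra_simps power2_eq_square)
  ultimately show ?thesis by simp
qed

lemma ln_le0: "\<bar>x::real\<bar> < 1 \<Longrightarrow> ln x \<le> 0"
proof -
  assume a: "\<bar>x\<bar> < 1"
  consider "x = 0" | "x > 0" | "x < 0" by linarith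
  then show "ln x \<le> 0"
  proof cases
    case 1 then show ?thesis by simp
  next
    case 2 then show ?thesis using a by simp
  next
    case 3
    then have "ln (- x) \<le> 0" using a by simp
    then show ?thesis using ln_minus[of x] by simp
  qed
qed

lemma loglik_grad:
  fixes E :: "'t::euclidean_space \<Rightarrow> real"
  assumes z: "z = 0 \<or> z = 1" and dE: "E differentiable (at \<theta>0)"
    and nb: "\<not> ((z = 1 \<and> E \<theta>0 = 0) \<or> (z = 0 \<and> E \<theta>0 = 1))"
  shows "gradient (\<lambda>\<theta>. loglik (E \<theta>) z) \<theta>0 = (z / E \<theta>0 - (1 - z) / (1 - E \<theta>0)) *\<^sub>R gradient E \<theta>0"
proof -
  have dd: "(E has_derivative (\<lambda>h. gradient E \<theta>0 \<bullet> h)) (at \<theta>0)"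
    by (rule gradient_has_derivative[OF dE])
  from z show ?thesis
  proof
    assume z0: "z = 0"
    then have ne: "1 - E \<theta>0 \<noteq> 0" using nb by simp
    have f: "(\<lambda>\<theta>. loglik (E \<theta>) z) = (\<lambda>\<theta>. ln (1 - E \<theta>))" using z0 by (simp add: loglik_def)
    have dl: "((\<lambda>t::real. 1 - t) has_real_derivative (0 - 1)) (at (E \<theta>0))"
      by (intro DERIV_diff DERIV_const DERIV_ident)
    have "((\<lambda>t. ln (1 - t)) has_real_derivative inverse (1 - E \<theta>0) * (0 - 1)) (at (E \<theta>0))"
      using DERIV_chain2[of ln "inverse (1 - E \<theta>0)" "\<lambda>t. 1 - t" "E \<theta>0" "0 - 1" UNIV] DERIV_ln_nz[OF ne] dl
      by simp
    from gradient_chain[OF dd this] have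
      "((\<lambda>\<theta>. ln (1 - E \<theta>)) has_derivative (\<lambda>h. ((inverse (1 - E \<theta>0) * (0 - 1)) *\<^sub>R gradient E \<theta>0) \<bullet> h)) (at \<theta>0)" .
    then have "gradient (\<lambda>\<theta>. ln (1 - E \<theta>)) \<theta>0 = (inverse (1 - E \<theta>0) * (0 - 1)) *\<^sub>R gradient E \<theta>0"
      by (rule gradient_eqI)
    then show ?thesis using z0 f by (simp add: divide_inverse)
  next
    assume z1: "z = 1"
    then have ne: "E \<theta>0 \<noteq> 0" using nb by simp
    have f: "(\<lambda>\<theta>. loglik (E \<theta>) z) = (\<lambda>\<theta>. ln (E \<theta>))" using z1 by (simp add: loglik_def)
    from gradient_chain[OF dd DERIV_ln_nz[OF ne]] have
      "((\<lambda>\<theta>. ln (E \<theta>)) has_derivative (\<lambda>h. (inverse (E \<theta>0) *\<^sub>R gradient E \<theta>0) \<bullet> h)) (at \<theta>0)" .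
    then have "gradient (\<lambda>\<theta>. ln (E \<theta>)) \<theta>0 = inverse (E \<theta>0) *\<^sub>R gradient E \<theta>0"
      by (rule gradient_eqI)
    then show ?thesis using z1 f by (simp add: divide_inverse)
  qed
qed

lemma gradient_nondiff:
  fixes f :: "'t::euclidean_space \<Rightarrow> real"
  assumes "\<not> (\<exists>g. (f has_derivative (\<lambda>h. g \<bullet> h)) (at x))"
  shows "gradient f x = (SOME g. False)"
proof -
  have "(\<lambda>g. (f has_derivative (\<lambda>h. g \<bullet> h)) (at x)) = (\<lambda>g. False)" using assms by auto
  then show ?thesis unfolding gradient_def by simp
qed

lemma loglik_grad_bd:
  fixes E :: "'t::euclidean_space \<Rightarrow> real"
  assumes z: "z = 0 \<or> z = 1" and dE: "E differentiable (at \<theta>0)"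
    and bd: "(z = 1 \<and> E \<theta>0 = 0) \<or> (z = 0 \<and> E \<theta>0 = 1)"
  shows "gradient (\<lambda>\<theta>. loglik (E \<theta>) z) \<theta>0 = 0 \<or> gradient (\<lambda>\<theta>. loglik (E \<theta>) z) \<theta>0 = (SOME g. False)"
proof (cases "\<exists>g. ((\<lambda>\<theta>. loglik (E \<theta>) z) has_derivative (\<lambda>h. g \<bullet> h)) (at \<theta>0)")
  case False
  then show ?thesis using gradient_nondiff by blast
next
  case True
  then obtain g where g: "((\<lambda>\<theta>. loglik (E \<theta>) z) has_derivative (\<lambda>h. g \<bullet> h)) (at \<theta>0)" by blast
  have "continuous (at \<theta>0) E" using dE by (rule differentiable_imp_continuous_within)
  then have "(E \<longlongrightarrow> E \<theta>0) (at \<theta>0)" by (simp add: continuous_at)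
  then have "\<forall>\<^sub>F \<theta> in at \<theta>0. dist (E \<theta>) (E \<theta>0) < 1/2" by (rule tendstoD) simp
  then obtain d where d: "d > 0" and dd: "\<And>\<theta>. \<theta> \<noteq> \<theta>0 \<Longrightarrow> dist \<theta> \<theta>0 < d \<Longrightarrow> dist (E \<theta>) (E \<theta>0) < 1/2"
    unfolding eventually_at by blast
  have near: "\<bar>E \<theta> - E \<theta>0\<bar> < 1/2" if "\<theta> \<in> ball \<theta>0 d" for \<theta>
    using dd[of \<theta>] that by (cases "\<theta> = \<theta>0") (auto simp: dist_commute dist_real_def abs_minus_commute)
  have max: "\<forall>y\<in>ball \<theta>0 d. loglik (E y) z \<le> loglik (E \<theta>0) z"
  proof
    fix y assume y: "y \<in> ball \<theta>0 d"
    from bd show "loglik (E y) z \<le> loglik (E \<theta>0) z"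
    proof
      assume a: "z = 1 \<and> E \<theta>0 = 0"
      then have "\<bar>E y\<bar> < 1" using near[OF y] by simp
      then show ?thesis using a ln_le0 by (simp add: loglik_def)
    next
      assume a: "z = 0 \<and> E \<theta>0 = 1"
      then have "\<bar>E y - 1\<bar> < 1/2" using near[OF y] by simp
      then have "\<bar>1 - E y\<bar> < 1" by (subst abs_minus_commute) linarith
      then show ?thesis using a ln_le0 by (simp add: loglik_def)
    qed
  qed
  have "(\<lambda>h. g \<bullet> h) = (\<lambda>v. 0)"
    by (rule differential_zero_maxmin[where S="ball \<theta>0 d", OF _ _ g]) (use d max in auto)
  then have "g \<bullet> g = 0" by metis
  then have "g = 0" by simp
  with g have "((\<lambda>\<theta>. loglik (E \<theta>) z) has_derivative (\<lambda>h. 0 \<bullet> h)) (at \<theta>0)" by simp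
  then show ?thesis using gradient_eqI by blast
qed

lemma phi_grad:
  fixes E :: "'t::euclidean_space \<Rightarrow> real"
  assumes dE: "E differentiable (at \<theta>0)" and e0: "E \<theta>0 \<noteq> 0" and e1: "E \<theta>0 \<noteq> 1"
  shows "gradient (\<lambda>\<theta>. phi (E \<theta>) q1 q0 z y \<tau>) \<theta>0
     = (- (z * (y - q1)) / (E \<theta>0)\<^sup>2 - (1 - z) * (y - q0) / (1 - E \<theta>0)\<^sup>2) *\<^sub>R gradient E \<theta>0"
proof -
  have dd: "(E has_derivative (\<lambda>h. gradient E \<theta>0 \<bullet> h)) (at \<theta>0)"
    by (rule gradient_has_derivative[OF dE])
  show ?thesis
    by (rule gradient_eqI[OF gradient_chain[OF dd phi_deriv[OF e0 e1]]])
qed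

lemma dr_identity:
  fixes e :: real
  assumes z: "z = 0 \<or> z = 1" and e0: "0 < e" and e1: "e < 1"
  shows "(- (z * (y - q1)) / e\<^sup>2 - (1 - z) * (y - q0) / (1 - e)\<^sup>2)
          + phi e q1 q0 z y \<tau> * ((z - e) / (e * (1 - e)))
        = (q1 - q0 - \<tau>) * ((z - e) / (e * (1 - e)))"
proof -
  have i1: "e * inverse e = 1" using e0 by simp
  have i2: "(1 - e) * inverse (1 - e) = 1" using e1 by simp
  from z show ?thesis
  proof
    assume "z = 0" then show ?thesis
      unfolding phi_def divide_inverse power2_eq_square inverse_mult_distrib
      using i1 i2 by algebra
  next
    assume "z = 1" then show ?thesis
      unfolding phi_def divide_inverse power2_eq_square inverse_mult_distrib
      using i1 i2 by algebra
  qed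
qed

lemma score_coef: "0 < e \<Longrightarrow> e < (1::real) \<Longrightarrow> z / e - (1 - z) / (1 - e) = (z - e) / (e * (1 - e))"
  by (simp add: field_simps)

lemma l2_scaleR_integrable:
  fixes S :: "'a \<Rightarrow> 'p::euclidean_space" and f :: "'a \<Rightarrow> real"
  assumes Sm: "S \<in> borel_measurable M" and S2: "integrable M (\<lambda>x. (norm (S x))\<^sup>2)"
    and fm: "f \<in> borel_measurable M" and f2: "integrable M (\<lambda>x. (f x)\<^sup>2)"
  shows "integrable M (\<lambda>x. f x *\<^sub>R S x)"
proof -
  have nSm: "(\<lambda>x. norm (S x)) \<in> borel_measurable M" using Sm by simp
  have i: "integrable M (\<lambda>x. f x * norm (S x))" by (rule l2_mult[OF fm nSm f2 S2])
  have m: "(\<lambda>x. f x *\<^sub>R S x) \<in> borel_measurable M" using Sm fm by simp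
  have "AE x in M. norm (f x *\<^sub>R S x) \<le> norm (f x * norm (S x))"
    by (simp add: abs_mult)
  then show ?thesis by (rule Bochner_Integration.integrable_bound[OF i m])
qed

lemma score_meas:
  fixes Ef :: "'a \<Rightarrow> 't::euclidean_space \<Rightarrow> real" and Z :: "'a \<Rightarrow> real"
  assumes Zb: "\<forall>\<omega>\<in>space M. Z \<omega> = 0 \<or> Z \<omega> = 1" and mZ: "Z \<in> borel_measurable M"
    and diff: "\<forall>\<omega>\<in>space M. Ef \<omega> differentiable (at \<theta>0)"
    and mE: "(\<lambda>\<omega>. Ef \<omega> \<theta>0) \<in> borel_measurable M"
    and mG: "(\<lambda>\<omega>. gradient (Ef \<omega>) \<theta>0) \<in> borel_measurable M"
    and mN: "(\<lambda>\<omega>. (norm (score l \<theta>0 \<omega>))\<^sup>2) \<in> borel_measurable M"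
    and l: "l = (\<lambda>\<theta> \<omega>. loglik (Ef \<omega> \<theta>) (Z \<omega>))"
  shows "score l \<theta>0 \<in> borel_measurable M"
proof -
  define c0 :: 't where "c0 = (SOME g. False)"
  define R where "R = (\<lambda>\<omega>. if (Z \<omega> = 1 \<and> Ef \<omega> \<theta>0 = 0) \<or> (Z \<omega> = 0 \<and> Ef \<omega> \<theta>0 = 1)
      then (if (norm (score l \<theta>0 \<omega>))\<^sup>2 = 0 then 0 else c0)
      else (Z \<omega> / Ef \<omega> \<theta>0 - (1 - Z \<omega>) / (1 - Ef \<omega> \<theta>0)) *\<^sub>R gradient (Ef \<omega>) \<theta>0)"
  have mR: "R \<in> borel_measurable M"
    unfolding R_def using mZ mE mG mN by measurable
  have eq: "score l \<theta>0 \<omega> = R \<omega>" if w: "\<omega> \<in> space M" for \<omega>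
  proof -
    have sc: "score l \<theta>0 \<omega> = gradient (\<lambda>\<theta>. loglik (Ef \<omega> \<theta>) (Z \<omega>)) \<theta>0"
      unfolding score_def l by simp
    have z: "Z \<omega> = 0 \<or> Z \<omega> = 1" using Zb w by auto
    have d: "Ef \<omega> differentiable (at \<theta>0)" using diff w by auto
    show ?thesis
    proof (cases "(Z \<omega> = 1 \<and> Ef \<omega> \<theta>0 = 0) \<or> (Z \<omega> = 0 \<and> Ef \<omega> \<theta>0 = 1)")
      case True
      have "score l \<theta>0 \<omega> = 0 \<or> score l \<theta>0 \<omega> = c0"
        unfolding sc c0_def using loglik_grad_bd[OF z d True] by blast
      then show ?thesis unfolding R_def using True by auto
    next
      case False
      then show ?thesis unfolding R_def sc using loglik_grad[OF z d False] by simp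
    qed
  qed
  show ?thesis using mR by (subst measurable_cong[OF eq]) auto
qed

lemma score_AE:
  fixes Ef :: "'a \<Rightarrow> 't::euclidean_space \<Rightarrow> real" and Z :: "'a \<Rightarrow> real"
  assumes Zb: "\<forall>\<omega>\<in>space M. Z \<omega> = 0 \<or> Z \<omega> = 1"
    and diff: "\<forall>\<omega>\<in>space M. Ef \<omega> differentiable (at \<theta>0)"
    and epos: "AE \<omega> in M. 0 < Ef \<omega> \<theta>0 \<and> Ef \<omega> \<theta>0 < 1"
    and l: "l = (\<lambda>\<theta> \<omega>. loglik (Ef \<omega> \<theta>) (Z \<omega>))"
  shows "AE \<omega> in M. score l \<theta>0 \<omega> = ((Z \<omega> - Ef \<omega> \<theta>0) / (Ef \<omega> \<theta>0 * (1 - Ef \<omega> \<theta>0))) *\<^sub>R gradient (Ef \<omega>) \<theta>0"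
  using epos AE_space
proof eventually_elim
  case (elim \<omega>)
  then have w: "\<omega> \<in> space M" and e: "0 < Ef \<omega> \<theta>0 \<and> Ef \<omega> \<theta>0 < 1" by auto
  have z: "Z \<omega> = 0 \<or> Z \<omega> = 1" using Zb w by auto
  have d: "Ef \<omega> differentiable (at \<theta>0)" using diff w by auto
  have nb: "\<not> ((Z \<omega> = 1 \<and> Ef \<omega> \<theta>0 = 0) \<or> (Z \<omega> = 0 \<and> Ef \<omega> \<theta>0 = 1))" using e by auto
  show "score l \<theta>0 \<omega> = ((Z \<omega> - Ef \<omega> \<theta>0) / (Ef \<omega> \<theta>0 * (1 - Ef \<omega> \<theta>0))) *\<^sub>R gradient (Ef \<omega>) \<theta>0"
    unfolding score_def l using loglik_grad[OF z d nb] score_coef[of "Ef \<omega> \<theta>0" "Z \<omega>"] e by simp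
qed

lemma vec_zero_basis:
  fixes x :: "'t::euclidean_space"
  assumes "\<And>b. b \<in> Basis \<Longrightarrow> x \<bullet> b = 0"
  shows "x = 0"
  using assms by (metis euclidean_all_zero_iff)

lemma dr_package:
  fixes Ef :: "'a \<Rightarrow> 't::euclidean_space \<Rightarrow> real" and q1 q0 Y Z :: "'a \<Rightarrow> real"
    and \<phi> l :: "'t \<Rightarrow> 'a \<Rightarrow> real"
  assumes P: "prob_space M"
    and Zb: "\<forall>\<omega>\<in>space M. Z \<omega> = 0 \<or> Z \<omega> = 1" and mZ: "Z \<in> borel_measurable M"
    and mY: "Y \<in> borel_measurable M" and mq1: "q1 \<in> borel_measurable M" and mq0: "q0 \<in> borel_measurable M"
    and diff: "\<forall>\<omega>\<in>space M. Ef \<omega> differentiable (at \<theta>0)"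
    and mE: "(\<lambda>\<omega>. Ef \<omega> \<theta>0) \<in> borel_measurable M"
    and mG: "(\<lambda>\<omega>. gradient (Ef \<omega>) \<theta>0) \<in> borel_measurable M"
    and epos: "AE \<omega> in M. 0 < Ef \<omega> \<theta>0 \<and> Ef \<omega> \<theta>0 < 1"
    and l: "l = (\<lambda>\<theta> \<omega>. loglik (Ef \<omega> \<theta>) (Z \<omega>))"
    and ph: "\<phi> = (\<lambda>\<theta> \<omega>. phi (Ef \<omega> \<theta>) (q1 \<omega>) (q0 \<omega>) (Z \<omega>) (Y \<omega>) \<tau>)"
    and S2: "integrable M (\<lambda>\<omega>. (norm (score l \<theta>0 \<omega>))\<^sup>2)"
    and Hb: "bij (fisher_info M l \<theta>0)"
    and \<phi>2: "integrable M (\<lambda>\<omega>. (\<phi> \<theta>0 \<omega>)\<^sup>2)"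
    and id\<phi>: "integrable M (\<lambda>\<omega>. gradient (\<lambda>\<theta>. \<phi> \<theta> \<omega>) \<theta>0)"
    and orthS: "\<And>b. integrable M (\<lambda>\<omega>. (Z \<omega> - Ef \<omega> \<theta>0) * ((gradient (Ef \<omega>) \<theta>0 \<bullet> b) / (Ef \<omega> \<theta>0 * (1 - Ef \<omega> \<theta>0))))
        \<Longrightarrow> (\<integral>\<omega>. (Z \<omega> - Ef \<omega> \<theta>0) * ((gradient (Ef \<omega>) \<theta>0 \<bullet> b) / (Ef \<omega> \<theta>0 * (1 - Ef \<omega> \<theta>0))) \<partial>M) = 0"
    and orthD: "\<And>b. integrable M (\<lambda>\<omega>. (Z \<omega> - Ef \<omega> \<theta>0) * ((q1 \<omega> - q0 \<omega> - \<tau>) * ((gradient (Ef \<omega>) \<theta>0 \<bullet> b) / (Ef \<omega> \<theta>0 * (1 - Ef \<omega> \<theta>0)))))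
        \<Longrightarrow> (\<integral>\<omega>. (Z \<omega> - Ef \<omega> \<theta>0) * ((q1 \<omega> - q0 \<omega> - \<tau>) * ((gradient (Ef \<omega>) \<theta>0 \<bullet> b) / (Ef \<omega> \<theta>0 * (1 - Ef \<omega> \<theta>0)))) \<partial>M) = 0"
  shows "Sigma_eps M \<phi> l \<theta>0 \<le> var_rv M (\<lambda>\<omega>. \<phi> \<theta>0 \<omega> - c \<bullet> score l \<theta>0 \<omega>)"
proof -
  define S where "S = score l \<theta>0"
  define e where "e = (\<lambda>\<omega>. Ef \<omega> \<theta>0)"
  define g where "g = (\<lambda>\<omega>. gradient (Ef \<omega>) \<theta>0)"
  have mS: "S \<in> borel_measurable M" unfolding S_def
    by (rule score_meas[OF Zb mZ diff mE mG _ l]) (use S2 in auto)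
  have Sae: "AE \<omega> in M. S \<omega> = ((Z \<omega> - e \<omega>) / (e \<omega> * (1 - e \<omega>))) *\<^sub>R g \<omega>"
    unfolding S_def e_def g_def by (rule score_AE[OF Zb diff epos l])
  have m\<phi>: "\<phi> \<theta>0 \<in> borel_measurable M" unfolding ph using mE mq1 mq0 mZ mY
    unfolding phi_def by measurable
  have Sb2: "\<And>b. integrable M (\<lambda>x. (S x \<bullet> b)\<^sup>2)" by (rule inner_sq_integrable[OF mS S2[folded S_def]])
  have iSb: "\<And>b. integrable M (\<lambda>x. S x \<bullet> b)"
    by (rule l2_integrable[OF P]) (use mS Sb2 in auto)
  have S0: "(\<integral>x. S x \<bullet> b \<partial>M) = 0" for b
  proof -
    let ?k = "\<lambda>\<omega>. (Z \<omega> - e \<omega>) * ((g \<omega> \<bullet> b) / (e \<omega> * (1 - e \<omega>)))"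
    have ae: "AE \<omega> in M. S \<omega> \<bullet> b = ?k \<omega>" using Sae by eventually_elim simp
    have mk: "?k \<in> borel_measurable M" unfolding e_def g_def using mZ mE mG by measurable
    have ik: "integrable M ?k"
      by (rule integrable_cong_AE_imp[OF iSb mk ae])
    have "(\<integral>x. S x \<bullet> b \<partial>M) = (\<integral>x. ?k x \<partial>M)"
      by (rule integral_cong_AE) (use mS mk ae in auto)
    also have "\<dots> = 0" using orthS ik unfolding e_def g_def by blast
    finally show ?thesis .
  qed
  have if\<phi>S: "integrable M (\<lambda>x. \<phi> \<theta>0 x *\<^sub>R S x)"
    by (rule l2_scaleR_integrable[OF mS S2[folded S_def] m\<phi> \<phi>2])
  have Dm: "Dmat M \<phi> \<theta>0 = (\<integral>x. \<phi> \<theta>0 x *\<^sub>R S x \<partial>M)"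
  proof -
    let ?G = "\<lambda>\<omega>. gradient (\<lambda>\<theta>. \<phi> \<theta> \<omega>) \<theta>0"
    have sumz: "(\<integral>x. ?G x \<partial>M) + (\<integral>x. \<phi> \<theta>0 x *\<^sub>R S x \<partial>M) = 0"
    proof (rule vec_zero_basis)
      fix b :: 't assume b: "b \<in> Basis"
      let ?k = "\<lambda>\<omega>. (Z \<omega> - e \<omega>) * ((q1 \<omega> - q0 \<omega> - \<tau>) * ((g \<omega> \<bullet> b) / (e \<omega> * (1 - e \<omega>))))"
      have ae: "AE \<omega> in M. ?G \<omega> \<bullet> b + \<phi> \<theta>0 \<omega> * (S \<omega> \<bullet> b) = ?k \<omega>"
        using Sae epos AE_space
      proof eventually_elim
        case (elim \<omega>)
        then have w: "\<omega> \<in> space M" and e01: "0 < e \<omega>" "e \<omega> < 1"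
          and Sw: "S \<omega> = ((Z \<omega> - e \<omega>) / (e \<omega> * (1 - e \<omega>))) *\<^sub>R g \<omega>"
          unfolding e_def by auto
        have z: "Z \<omega> = 0 \<or> Z \<omega> = 1" using Zb w by auto
        have d: "Ef \<omega> differentiable (at \<theta>0)" using diff w by auto
        have Gw: "?G \<omega> = (- (Z \<omega> * (Y \<omega> - q1 \<omega>)) / (e \<omega>)\<^sup>2 - (1 - Z \<omega>) * (Y \<omega> - q0 \<omega>) / (1 - e \<omega>)\<^sup>2) *\<^sub>R g \<omega>"
          unfolding ph e_def g_def
          by (rule phi_grad[OF d]) (use e01 in \<open>auto simp: e_def\<close>)
        have idt: "(- (Z \<omega> * (Y \<omega> - q1 \<omega>)) / (e \<omega>)\<^sup>2 - (1 - Z \<omega>) * (Y \<omega> - q0 \<omega>) / (1 - e \<omega>)\<^sup>2)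
              + phi (e \<omega>) (q1 \<omega>) (q0 \<omega>) (Z \<omega>) (Y \<omega>) \<tau> * ((Z \<omega> - e \<omega>) / (e \<omega> * (1 - e \<omega>)))
            = (q1 \<omega> - q0 \<omega> - \<tau>) * ((Z \<omega> - e \<omega>) / (e \<omega> * (1 - e \<omega>)))"
          by (rule dr_identity[OF z e01])
        have "?G \<omega> \<bullet> b + \<phi> \<theta>0 \<omega> * (S \<omega> \<bullet> b)
            = ((- (Z \<omega> * (Y \<omega> - q1 \<omega>)) / (e \<omega>)\<^sup>2 - (1 - Z \<omega>) * (Y \<omega> - q0 \<omega>) / (1 - e \<omega>)\<^sup>2)
              + phi (e \<omega>) (q1 \<omega>) (q0 \<omega>) (Z \<omega>) (Y \<omega>) \<tau> * ((Z \<omega> - e \<omega>) / (e \<omega> * (1 - e \<omega>)))) * (g \<omega> \<bullet> b)"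
          unfolding Gw Sw by (simp add: ph e_def algebra_simps)
        also have "\<dots> = ?k \<omega>" unfolding idt by (simp add: field_simps)
        finally show ?case .
      qed
      have iG: "integrable M (\<lambda>\<omega>. ?G \<omega> \<bullet> b)" using id\<phi> by simp
      have iPS: "integrable M (\<lambda>\<omega>. \<phi> \<theta>0 \<omega> * (S \<omega> \<bullet> b))"
        by (rule l2_mult[OF m\<phi> _ \<phi>2 Sb2]) (use mS in simp)
      have mk: "?k \<in> borel_measurable M" unfolding e_def g_def using mZ mE mG mq1 mq0 by measurable
      have ik: "integrable M ?k"
        by (rule integrable_cong_AE_imp[OF _ mk ae]) (use iG iPS in simp)
      have "((\<integral>x. ?G x \<partial>M) + (\<integral>x. \<phi> \<theta>0 x *\<^sub>R S x \<partial>M)) \<bullet> b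
          = (\<integral>x. ?G x \<bullet> b \<partial>M) + (\<integral>x. (\<phi> \<theta>0 x *\<^sub>R S x) \<bullet> b \<partial>M)"
      proof -
        have e1: "(\<integral>x. ?G x \<partial>M) \<bullet> b = (\<integral>x. ?G x \<bullet> b \<partial>M)"
          by (rule integral_inner_left[symmetric]) (use id\<phi> in auto)
        have e2: "(\<integral>x. \<phi> \<theta>0 x *\<^sub>R S x \<partial>M) \<bullet> b = (\<integral>x. (\<phi> \<theta>0 x *\<^sub>R S x) \<bullet> b \<partial>M)"
          by (rule integral_inner_left[symmetric]) (use if\<phi>S in auto)
        show ?thesis unfolding inner_add_left e1 e2 ..
      qed
      also have "\<dots> = (\<integral>x. ?G x \<bullet> b + \<phi> \<theta>0 x * (S x \<bullet> b) \<partial>M)"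
        using iG iPS by simp
      also have "\<dots> = (\<integral>x. ?k x \<partial>M)"
        by (rule integral_cong_AE) (use ae mk iG iPS in auto)
      also have "\<dots> = 0" using orthD ik unfolding e_def g_def by blast
      finally show "((\<integral>x. ?G x \<partial>M) + (\<integral>x. \<phi> \<theta>0 x *\<^sub>R S x \<partial>M)) \<bullet> b = 0" .
    qed
    then show ?thesis unfolding Dmat_def by (simp add: neg_eq_iff_add_eq_0)
  qed
  have H: "fisher_info M l \<theta>0 = (\<lambda>v. \<integral>x. (S x \<bullet> v) *\<^sub>R S x \<partial>M)"
    unfolding fisher_info_def S_def by (rule ext) simp
  have "Sigma_eps M \<phi> l \<theta>0 = var_rv M (\<lambda>x. \<phi> \<theta>0 x - Dmat M \<phi> \<theta>0 \<bullet> inv (fisher_info M l \<theta>0) (S x))"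
    unfolding Sigma_eps_def S_def ..
  also have "\<dots> \<le> var_rv M (\<lambda>x. \<phi> \<theta>0 x - c \<bullet> S x)"
    by (rule proj_lemma[OF P mS S2[folded S_def] S0 m\<phi> \<phi>2 H Hb Dm])
  finally show ?thesis unfolding S_def .
qed

lemma phi_decomp:
  fixes e :: real
  assumes z: "z = 0 \<or> z = 1" and e0: "e \<noteq> 0" and e1: "e \<noteq> 1"
  shows "phi e q1 q0 z y \<tau> = (y - (z * q1 + (1 - z) * q0)) * (z / e - (1 - z) / (1 - e)) + (q1 - q0 - \<tau>)"
proof -
  have i1: "e * inverse e = 1" using e0 by simp
  have i2: "(1 - e) * inverse (1 - e) = 1" using e1 by simp
  from z show ?thesis
  proof
    assume "z = 0" then show ?thesis
      unfolding phi_def divide_inverse using i1 i2 by algebra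
  next
    assume "z = 1" then show ?thesis
      unfolding phi_def divide_inverse using i1 i2 by algebra
  qed
qed

lemma bounded_integrable:
  fixes f :: "'a \<Rightarrow> real"
  assumes "prob_space M" "f \<in> borel_measurable M" "\<And>x. x \<in> space M \<Longrightarrow> \<bar>f x\<bar> \<le> B"
  shows "integrable M f"
proof -
  interpret prob_space M by fact
  show ?thesis by (rule integrable_const_bound[where B=B]) (use assms in auto)
qed

lemma bounded_times_integrable:
  fixes f g :: "'a \<Rightarrow> real"
  assumes "integrable M g" "f \<in> borel_measurable M" "\<And>x. x \<in> space M \<Longrightarrow> \<bar>f x\<bar> \<le> B"
  shows "integrable M (\<lambda>x. f x * g x)"
proof (rule Bochner_Integration.integrable_bound[where f="\<lambda>x. B * g x"])
  show "integrable M (\<lambda>x. B * g x)" using assms by simp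
  show "(\<lambda>x. f x * g x) \<in> borel_measurable M" using assms by (simp add: borel_measurable_integrable)
  show "AE x in M. norm (f x * g x) \<le> norm (B * g x)"
  proof (rule AE_I2)
    fix x assume "x \<in> space M"
    then have "\<bar>f x\<bar> \<le> B" using assms by auto
    then have "\<bar>f x\<bar> * \<bar>g x\<bar> \<le> B * \<bar>g x\<bar>" by (intro mult_right_mono) auto
    moreover have "B \<ge> 0" using \<open>\<bar>f x\<bar> \<le> B\<close> by linarith
    ultimately show "norm (f x * g x) \<le> norm (B * g x)" by (simp add: abs_mult)
  qed
qed

lemma ev_ge_real: "\<forall>\<^sub>F n in sequentially. r \<le> real n"
proof -
  obtain N :: nat where "r < real N" using reals_Archimedean2 by blast
  then show ?thesis by (intro eventually_sequentiallyI[where c=N]) auto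
qed

lemma ev_inv_le: "(c::real) > 0 \<Longrightarrow> \<forall>\<^sub>F n in sequentially. 1 / (real n + 1) \<le> c"
proof -
  assume c: "c > 0"
  have "(\<lambda>n. inverse (real (Suc n))) \<longlonglongrightarrow> 0" by (rule LIMSEQ_inverse_real_of_nat)
  then have "\<forall>\<^sub>F n in sequentially. inverse (real (Suc n)) < c" using c by (rule order_tendstoD)
  then show ?thesis by eventually_elim (simp add: divide_inverse add.commute)
qed

lemma cross_zero:
  fixes X :: "'a \<Rightarrow> 'x" and W :: "'a \<Rightarrow> 'w" and Z Y Y0 Y1 :: "'a \<Rightarrow> real" and E :: "'x \<Rightarrow> real"
    and Q :: "'x \<Rightarrow> 'w \<Rightarrow> real \<Rightarrow> real" and G :: "'x \<times> 'w \<Rightarrow> real"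
  assumes P: "prob_space M" and mX: "X \<in> measurable M MX" and mW: "W \<in> measurable M MW"
    and mZ: "Z \<in> borel_measurable M" and Zb: "\<forall>\<omega>\<in>space M. Z \<omega> = 0 \<or> Z \<omega> = 1"
    and CI: "cond_indep M Z borel (\<lambda>\<omega>. (W \<omega>, Y0 \<omega>, Y1 \<omega>)) (MW \<Otimes>\<^sub>M borel) X MX"
    and mE: "E \<in> borel_measurable MX"
    and Ecorr: "AE \<omega> in M. E (X \<omega>) = prop_score M X MX Z \<omega>"
    and epos: "AE \<omega> in M. 0 < E (X \<omega>) \<and> E (X \<omega>) < 1"
    and mY: "Y \<in> borel_measurable M" and iY: "integrable M Y"
    and mQ: "\<And>z. (\<lambda>p. Q (fst p) (snd p) z) \<in> borel_measurable (MX \<Otimes>\<^sub>M MW)"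
    and CE: "AE \<omega> in M. Q (X \<omega>) (W \<omega>) (Z \<omega>)
               = cond_exp_given M (\<lambda>\<omega>. (X \<omega>, W \<omega>, Z \<omega>)) (MX \<Otimes>\<^sub>M MW \<Otimes>\<^sub>M borel) Y \<omega>"
    and mG: "G \<in> borel_measurable (MX \<Otimes>\<^sub>M MW)"
    and iPV: "integrable M (\<lambda>\<omega>. phi (E (X \<omega>)) (Q (X \<omega>) (W \<omega>) 1) (Q (X \<omega>) (W \<omega>) 0) (Z \<omega>) (Y \<omega>) \<tau>
                 * ((Z \<omega> - E (X \<omega>)) * G (X \<omega>, W \<omega>)))"
  shows "(\<integral>\<omega>. phi (E (X \<omega>)) (Q (X \<omega>) (W \<omega>) 1) (Q (X \<omega>) (W \<omega>) 0) (Z \<omega>) (Y \<omega>) \<tau>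
                 * ((Z \<omega> - E (X \<omega>)) * G (X \<omega>, W \<omega>)) \<partial>M) = 0"
proof -
  interpret prob_space M by fact
  define ps where "ps = (\<lambda>\<omega>. phi (E (X \<omega>)) (Q (X \<omega>) (W \<omega>) 1) (Q (X \<omega>) (W \<omega>) 0) (Z \<omega>) (Y \<omega>) \<tau>)"
  define v where "v = (\<lambda>p. Q (fst p) (snd p) 1 - Q (fst p) (snd p) 0 - \<tau>)"
  define En where "En = (\<lambda>(n::nat) p. \<bar>G p\<bar> \<le> real n \<and> \<bar>v p\<bar> \<le> real n
      \<and> 1 / (real n + 1) \<le> E (fst p) \<and> 1 / (real n + 1) \<le> 1 - E (fst p))"
  define Gn where "Gn = (\<lambda>n p. if En n p then G p else 0)"
  define N3 where "N3 = (MX \<Otimes>\<^sub>M MW \<Otimes>\<^sub>M (borel :: real measure))"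
  define V3 where "V3 = (\<lambda>\<omega>. (X \<omega>, W \<omega>, Z \<omega>))"
  define F where "F = vimage_algebra (space M) V3 N3"
  have mV3: "V3 \<in> measurable M N3" unfolding V3_def N3_def using mX mW mZ by measurable
  interpret sigma_finite_subalgebra M F unfolding F_def by (rule sfs_vimage[OF P mV3])
  have mEX: "(\<lambda>\<omega>. E (X \<omega>)) \<in> borel_measurable M" using mE mX by measurable
  have mQz: "(\<lambda>\<omega>. Q (X \<omega>) (W \<omega>) z) \<in> borel_measurable M" for z
  proof -
    have "(\<lambda>\<omega>. (X \<omega>, W \<omega>)) \<in> measurable M (MX \<Otimes>\<^sub>M MW)" using mX mW by measurable
    from measurable_compose[OF this mQ[of z]] show ?thesis by simp
  qed
  have mv: "v \<in> borel_measurable (MX \<Otimes>\<^sub>M MW)" unfolding v_def using mQ by measurable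
  have mEfst: "(\<lambda>p. E (fst p)) \<in> borel_measurable (MX \<Otimes>\<^sub>M MW)" using mE by measurable
  have mGn: "Gn n \<in> borel_measurable (MX \<Otimes>\<^sub>M MW)" for n
    unfolding Gn_def En_def using mG mv mEfst by measurable
  have mXW: "(\<lambda>\<omega>. (X \<omega>, W \<omega>)) \<in> measurable M (MX \<Otimes>\<^sub>M MW)" using mX mW by measurable
  have mGnXW: "(\<lambda>\<omega>. Gn n (X \<omega>, W \<omega>)) \<in> borel_measurable M" for n
    using measurable_compose[OF mXW mGn] by simp
  have mvXW: "(\<lambda>\<omega>. v (X \<omega>, W \<omega>)) \<in> borel_measurable M"
    using measurable_compose[OF mXW mv] by simp
  have mps: "ps \<in> borel_measurable M" unfolding ps_def phi_def using mEX mQz mZ mY by measurable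
  define QZ where "QZ = (\<lambda>\<omega>. Z \<omega> * Q (X \<omega>) (W \<omega>) 1 + (1 - Z \<omega>) * Q (X \<omega>) (W \<omega>) 0)"
  have QZeq: "QZ \<omega> = Q (X \<omega>) (W \<omega>) (Z \<omega>)" if "\<omega> \<in> space M" for \<omega>
    using Zb that unfolding QZ_def by auto
  have mQZ: "QZ \<in> borel_measurable M" unfolding QZ_def using mZ mQz by measurable
  define hn where "hn = (\<lambda>n (t :: 'x \<times> 'w \<times> real). (snd (snd t) / E (fst t) - (1 - snd (snd t)) / (1 - E (fst t)))
        * (snd (snd t) - E (fst t)) * Gn n (fst t, fst (snd t)))"
  have mhn: "hn n \<in> borel_measurable N3" for n
  proof -
    have a: "(\<lambda>t::'x \<times> 'w \<times> real. (fst t, fst (snd t))) \<in> measurable N3 (MX \<Otimes>\<^sub>M MW)"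
      unfolding N3_def by measurable
    have "(\<lambda>t::'x \<times> 'w \<times> real. Gn n (fst t, fst (snd t))) \<in> borel_measurable N3"
      using measurable_compose[OF a mGn] by simp
    moreover have "(\<lambda>t::'x \<times> 'w \<times> real. E (fst t)) \<in> borel_measurable N3"
      unfolding N3_def using mE by measurable
    moreover have "(\<lambda>t::'x \<times> 'w \<times> real. snd (snd t)) \<in> borel_measurable N3"
      unfolding N3_def by measurable
    ultimately show ?thesis unfolding hn_def by measurable
  qed
  define Hn where "Hn = (\<lambda>n \<omega>. hn n (V3 \<omega>))"
  have mHnF: "Hn n \<in> borel_measurable F" for n
    unfolding Hn_def F_def by (rule meas_vimage_comp[OF mV3 mhn])
  have mHn: "Hn n \<in> borel_measurable M" for n
    unfolding Hn_def using measurable_compose[OF mV3 mhn] by simp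
  have Hn_bound: "\<bar>Hn n \<omega>\<bar> \<le> (real n + 1) * real n" if w: "\<omega> \<in> space M" for n \<omega>
  proof (cases "En n (X \<omega>, W \<omega>)")
    case False
    then show ?thesis unfolding Hn_def hn_def V3_def Gn_def by simp
  next
    case True
    let ?e = "E (X \<omega>)"
    have b1: "1 / (real n + 1) \<le> ?e" and b2: "1 / (real n + 1) \<le> 1 - ?e" and bG: "\<bar>G (X \<omega>, W \<omega>)\<bar> \<le> real n"
      using True unfolding En_def by auto
    have pos: "0 < 1 / (real n + 1)" by simp
    have e0: "0 < ?e" and e1: "0 < 1 - ?e" using b1 b2 pos by linarith+
    have ke: "\<bar>(Z \<omega> / ?e - (1 - Z \<omega>) / (1 - ?e)) * (Z \<omega> - ?e)\<bar> \<le> real n + 1"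
    proof -
      have z: "Z \<omega> = 0 \<or> Z \<omega> = 1" using Zb w by auto
      have inv1: "1 / ?e \<le> real n + 1"
        using b1 e0 by (simp add: field_simps)
      have inv2: "1 / (1 - ?e) \<le> real n + 1"
        using b2 e1 by (simp add: field_simps)
      from z show ?thesis
      proof
        assume z0: "Z \<omega> = 0"
        have "\<bar>(Z \<omega> / ?e - (1 - Z \<omega>) / (1 - ?e)) * (Z \<omega> - ?e)\<bar> = ?e / (1 - ?e)"
          using z0 e0 e1 by (simp add: abs_mult)
        also have "\<dots> \<le> 1 / (1 - ?e)" using e0 e1 by (simp add: divide_right_mono)
        finally show ?thesis using inv2 by linarith
      next
        assume z1: "Z \<omega> = 1"
        have "\<bar>(Z \<omega> / ?e - (1 - Z \<omega>) / (1 - ?e)) * (Z \<omega> - ?e)\<bar> = (1 - ?e) / ?e"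
          using z1 e0 e1 by (simp add: abs_mult)
        also have "\<dots> \<le> 1 / ?e" using e0 e1 by (simp add: divide_right_mono)
        finally show ?thesis using inv1 by linarith
      qed
    qed
    have "\<bar>Hn n \<omega>\<bar> = \<bar>(Z \<omega> / ?e - (1 - Z \<omega>) / (1 - ?e)) * (Z \<omega> - ?e)\<bar> * \<bar>G (X \<omega>, W \<omega>)\<bar>"
      unfolding Hn_def hn_def V3_def Gn_def using True by (simp add: abs_mult)
    also have "\<dots> \<le> (real n + 1) * real n"
      by (rule mult_mono[OF ke bG]) auto
    finally show ?thesis .
  qed
  have vG_bound: "\<bar>(Z \<omega> - E (X \<omega>)) * (v (X \<omega>, W \<omega>) * Gn n (X \<omega>, W \<omega>))\<bar> \<le> real n * real n"
    if w: "\<omega> \<in> space M" for n \<omega>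
  proof (cases "En n (X \<omega>, W \<omega>)")
    case False
    then show ?thesis unfolding Gn_def by simp
  next
    case True
    let ?e = "E (X \<omega>)"
    have b1: "1 / (real n + 1) \<le> ?e" and b2: "1 / (real n + 1) \<le> 1 - ?e" and bG: "\<bar>G (X \<omega>, W \<omega>)\<bar> \<le> real n"
      and bv: "\<bar>v (X \<omega>, W \<omega>)\<bar> \<le> real n"
      using True unfolding En_def by auto
    have pos: "0 < 1 / (real n + 1)" by simp
    have z: "Z \<omega> = 0 \<or> Z \<omega> = 1" using Zb w by auto
    have e01: "0 \<le> ?e" "?e \<le> 1" using b1 b2 pos by linarith+
    have ze: "\<bar>Z \<omega> - ?e\<bar> \<le> 1" using z e01 by auto
    have "\<bar>(Z \<omega> - ?e) * (v (X \<omega>, W \<omega>) * Gn n (X \<omega>, W \<omega>))\<bar>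
        = \<bar>Z \<omega> - ?e\<bar> * (\<bar>v (X \<omega>, W \<omega>)\<bar> * \<bar>G (X \<omega>, W \<omega>)\<bar>)"
      unfolding Gn_def using True by (simp add: abs_mult)
    also have "\<dots> \<le> 1 * (real n * real n)"
      by (intro mult_mono ze bv bG) auto
    finally show ?thesis by simp
  qed
  have zero_n: "(\<integral>\<omega>. ps \<omega> * ((Z \<omega> - E (X \<omega>)) * Gn n (X \<omega>, W \<omega>)) \<partial>M) = 0" for n
  proof -
    have split: "ps \<omega> * ((Z \<omega> - E (X \<omega>)) * Gn n (X \<omega>, W \<omega>))
        = (Y \<omega> - QZ \<omega>) * Hn n \<omega> + (Z \<omega> - E (X \<omega>)) * (v (X \<omega>, W \<omega>) * Gn n (X \<omega>, W \<omega>))"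
      if w: "\<omega> \<in> space M" for \<omega>
    proof (cases "En n (X \<omega>, W \<omega>)")
      case False
      then show ?thesis unfolding Hn_def hn_def V3_def Gn_def by simp
    next
      case True
      let ?e = "E (X \<omega>)"
      have b1: "1 / (real n + 1) \<le> ?e" and b2: "1 / (real n + 1) \<le> 1 - ?e"
        using True unfolding En_def by auto
      have pos: "0 < 1 / (real n + 1)" by simp
      have e0: "?e \<noteq> 0" and e1: "?e \<noteq> 1" using b1 b2 pos by linarith+
      have z: "Z \<omega> = 0 \<or> Z \<omega> = 1" using Zb w by auto
      define k where "k = Z \<omega> / ?e - (1 - Z \<omega>) / (1 - ?e)"
      have pw: "ps \<omega> = (Y \<omega> - QZ \<omega>) * k + v (X \<omega>, W \<omega>)"
        unfolding ps_def QZ_def v_def k_def using phi_decomp[OF z e0 e1] by simp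
      have Hw: "Hn n \<omega> = k * (Z \<omega> - ?e) * G (X \<omega>, W \<omega>)"
        unfolding Hn_def hn_def V3_def Gn_def k_def using True by simp
      show ?thesis unfolding Hw pw Gn_def using True
        by (simp add: algebra_simps)
    qed
    have iYH: "integrable M (\<lambda>\<omega>. Hn n \<omega> * Y \<omega>)"
      by (rule bounded_times_integrable[OF iY mHn Hn_bound])
    have ce1: "integrable M (\<lambda>\<omega>. Hn n \<omega> * real_cond_exp M F Y \<omega>)"
      and ce2: "(\<integral>\<omega>. Hn n \<omega> * real_cond_exp M F Y \<omega> \<partial>M) = (\<integral>\<omega>. Hn n \<omega> * Y \<omega> \<partial>M)"
      using real_cond_exp_intg[OF iYH mHnF mY] by auto
    have aeQ: "AE \<omega> in M. Hn n \<omega> * QZ \<omega> = Hn n \<omega> * real_cond_exp M F Y \<omega>"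
      using CE AE_space
    proof eventually_elim
      case (elim \<omega>)
      then show ?case using QZeq[of \<omega>]
        unfolding F_def V3_def N3_def cond_exp_given_def by simp
    qed
    have mHQ: "(\<lambda>\<omega>. Hn n \<omega> * QZ \<omega>) \<in> borel_measurable M" using mHn mQZ by simp
    have iHQ: "integrable M (\<lambda>\<omega>. Hn n \<omega> * QZ \<omega>)"
      by (rule integrable_cong_AE_imp[OF ce1 mHQ]) (use aeQ in \<open>auto elim: AE_mp\<close>)
    have intHQ: "(\<integral>\<omega>. Hn n \<omega> * QZ \<omega> \<partial>M) = (\<integral>\<omega>. Hn n \<omega> * Y \<omega> \<partial>M)"
    proof -
      have "(\<integral>\<omega>. Hn n \<omega> * QZ \<omega> \<partial>M) = (\<integral>\<omega>. Hn n \<omega> * real_cond_exp M F Y \<omega> \<partial>M)"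
        by (rule integral_cong_AE) (use mHQ ce1 aeQ in auto)
      then show ?thesis using ce2 by simp
    qed
    have iR: "integrable M (\<lambda>\<omega>. (Y \<omega> - QZ \<omega>) * Hn n \<omega>)"
    proof -
      have "integrable M (\<lambda>\<omega>. Hn n \<omega> * Y \<omega> - Hn n \<omega> * QZ \<omega>)" using iYH iHQ by simp
      then show ?thesis by (simp add: algebra_simps)
    qed
    have intR: "(\<integral>\<omega>. (Y \<omega> - QZ \<omega>) * Hn n \<omega> \<partial>M) = 0"
    proof -
      have "(\<integral>\<omega>. (Y \<omega> - QZ \<omega>) * Hn n \<omega> \<partial>M) = (\<integral>\<omega>. Hn n \<omega> * Y \<omega> - Hn n \<omega> * QZ \<omega> \<partial>M)"
        by (simp add: algebra_simps)
      also have "\<dots> = (\<integral>\<omega>. Hn n \<omega> * Y \<omega> \<partial>M) - (\<integral>\<omega>. Hn n \<omega> * QZ \<omega> \<partial>M)"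
        by (rule Bochner_Integration.integral_diff[OF iYH iHQ])
      finally show ?thesis using intHQ by simp
    qed
    have mvG: "(\<lambda>p. v p * Gn n p) \<in> borel_measurable (MX \<Otimes>\<^sub>M MW)" using mv mGn by simp
    have ivG: "integrable M (\<lambda>\<omega>. (Z \<omega> - E (X \<omega>)) * (v (X \<omega>, W \<omega>) * Gn n (X \<omega>, W \<omega>)))"
      by (rule bounded_integrable[OF P _ vG_bound]) (use mZ mEX mvXW mGnXW in simp)
    have intvG: "(\<integral>\<omega>. (Z \<omega> - E (X \<omega>)) * (v (X \<omega>, W \<omega>) * Gn n (X \<omega>, W \<omega>)) \<partial>M) = 0"
    proof -
      have Epos: "AE \<omega> in M. 0 \<le> E (X \<omega>)" using epos by eventually_elim simp
      show ?thesis
        using K_orth[OF P mX mW mZ Zb CI mE Ecorr Epos mvG] ivG by simp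
    qed
    have "(\<integral>\<omega>. ps \<omega> * ((Z \<omega> - E (X \<omega>)) * Gn n (X \<omega>, W \<omega>)) \<partial>M)
        = (\<integral>\<omega>. (Y \<omega> - QZ \<omega>) * Hn n \<omega> + (Z \<omega> - E (X \<omega>)) * (v (X \<omega>, W \<omega>) * Gn n (X \<omega>, W \<omega>)) \<partial>M)"
      by (rule Bochner_Integration.integral_cong[OF refl split])
    also have "\<dots> = 0" using iR ivG intR intvG by simp
    finally show ?thesis .
  qed
  have lim: "(\<lambda>n. \<integral>\<omega>. ps \<omega> * ((Z \<omega> - E (X \<omega>)) * Gn n (X \<omega>, W \<omega>)) \<partial>M)
      \<longlonglongrightarrow> (\<integral>\<omega>. ps \<omega> * ((Z \<omega> - E (X \<omega>)) * G (X \<omega>, W \<omega>)) \<partial>M)"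
  proof (rule integral_dominated_convergence[where w="\<lambda>\<omega>. norm (ps \<omega> * ((Z \<omega> - E (X \<omega>)) * G (X \<omega>, W \<omega>)))"])
    show "(\<lambda>\<omega>. ps \<omega> * ((Z \<omega> - E (X \<omega>)) * G (X \<omega>, W \<omega>))) \<in> borel_measurable M"
      using iPV unfolding ps_def by auto
    show "\<And>n. (\<lambda>\<omega>. ps \<omega> * ((Z \<omega> - E (X \<omega>)) * Gn n (X \<omega>, W \<omega>))) \<in> borel_measurable M"
      using mps mZ mEX mGnXW by simp
    show "integrable M (\<lambda>\<omega>. norm (ps \<omega> * ((Z \<omega> - E (X \<omega>)) * G (X \<omega>, W \<omega>))))"
      using iPV unfolding ps_def by (rule integrable_norm)
    show "AE x in M. (\<lambda>n. ps x * ((Z x - E (X x)) * Gn n (X x, W x))) \<longlonglongrightarrow> ps x * ((Z x - E (X x)) * G (X x, W x))"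
      using epos
    proof eventually_elim
      case (elim x)
      then have e0: "0 < E (X x)" and e1: "0 < 1 - E (X x)" by auto
      have "\<forall>\<^sub>F n in sequentially. En n (X x, W x)"
        unfolding En_def using ev_ge_real[of "\<bar>G (X x, W x)\<bar>"] ev_ge_real[of "\<bar>v (X x, W x)\<bar>"]
          ev_inv_le[OF e0] ev_inv_le[OF e1]
        by (auto elim!: eventually_elim2 eventually_rev_mp intro!: eventually_conj)
      then have "\<forall>\<^sub>F n in sequentially. ps x * ((Z x - E (X x)) * Gn n (X x, W x)) = ps x * ((Z x - E (X x)) * G (X x, W x))"
        by eventually_elim (simp add: Gn_def)
      then show ?case by (rule tendsto_eventually)
    qed
    show "\<And>n. AE x in M. norm (ps x * ((Z x - E (X x)) * Gn n (X x, W x))) \<le> norm (ps x * ((Z x - E (X x)) * G (X x, W x)))"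
      by (intro AE_I2) (auto simp: Gn_def abs_mult)
  qed
  have "(\<lambda>n. \<integral>\<omega>. ps \<omega> * ((Z \<omega> - E (X \<omega>)) * Gn n (X \<omega>, W \<omega>)) \<partial>M) = (\<lambda>n. 0)"
    using zero_n by (intro ext) blast
  with lim have "(\<lambda>n. 0::real) \<longlonglongrightarrow> (\<integral>\<omega>. ps \<omega> * ((Z \<omega> - E (X \<omega>)) * G (X \<omega>, W \<omega>)) \<partial>M)"
    by simp
  then show ?thesis unfolding ps_def by (rule LIMSEQ_unique[OF tendsto_const, symmetric])
qed

lemma opt_lemma:
  fixes X :: "'a \<Rightarrow> 'x" and W :: "'a \<Rightarrow> 'w" and Z Y Y0 Y1 :: "'a \<Rightarrow> real" and E :: "'x \<Rightarrow> real"
    and Q :: "'x \<Rightarrow> 'w \<Rightarrow> real \<Rightarrow> real" and G :: "'x \<times> 'w \<Rightarrow> real" and \<psi> :: "'a \<Rightarrow> real"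
  assumes P: "prob_space M" and mX: "X \<in> measurable M MX" and mW: "W \<in> measurable M MW"
    and mZ: "Z \<in> borel_measurable M" and Zb: "\<forall>\<omega>\<in>space M. Z \<omega> = 0 \<or> Z \<omega> = 1"
    and CI: "cond_indep M Z borel (\<lambda>\<omega>. (W \<omega>, Y0 \<omega>, Y1 \<omega>)) (MW \<Otimes>\<^sub>M borel) X MX"
    and mE: "E \<in> borel_measurable MX"
    and Ecorr: "AE \<omega> in M. E (X \<omega>) = prop_score M X MX Z \<omega>"
    and epos: "AE \<omega> in M. 0 < E (X \<omega>) \<and> E (X \<omega>) < 1"
    and mY: "Y \<in> borel_measurable M" and iY: "integrable M Y"
    and mQ: "\<And>z. (\<lambda>p. Q (fst p) (snd p) z) \<in> borel_measurable (MX \<Otimes>\<^sub>M MW)"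
    and CE: "AE \<omega> in M. Q (X \<omega>) (W \<omega>) (Z \<omega>)
               = cond_exp_given M (\<lambda>\<omega>. (X \<omega>, W \<omega>, Z \<omega>)) (MX \<Otimes>\<^sub>M MW \<Otimes>\<^sub>M borel) Y \<omega>"
    and mG: "G \<in> borel_measurable (MX \<Otimes>\<^sub>M MW)"
    and ps2: "integrable M (\<lambda>\<omega>. (phi (E (X \<omega>)) (Q (X \<omega>) (W \<omega>) 1) (Q (X \<omega>) (W \<omega>) 0) (Z \<omega>) (Y \<omega>) \<tau>)\<^sup>2)"
    and m\<psi>: "\<psi> \<in> borel_measurable M" and \<psi>2: "integrable M (\<lambda>\<omega>. (\<psi> \<omega>)\<^sup>2)"
    and ae\<psi>: "AE \<omega> in M. \<psi> \<omega> = phi (E (X \<omega>)) (Q (X \<omega>) (W \<omega>) 1) (Q (X \<omega>) (W \<omega>) 0) (Z \<omega>) (Y \<omega>) \<tau>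
                 + (Z \<omega> - E (X \<omega>)) * G (X \<omega>, W \<omega>)"
  shows "var_rv M (\<lambda>\<omega>. phi (E (X \<omega>)) (Q (X \<omega>) (W \<omega>) 1) (Q (X \<omega>) (W \<omega>) 0) (Z \<omega>) (Y \<omega>) \<tau>) \<le> var_rv M \<psi>"
proof -
  define ps where "ps = (\<lambda>\<omega>. phi (E (X \<omega>)) (Q (X \<omega>) (W \<omega>) 1) (Q (X \<omega>) (W \<omega>) 0) (Z \<omega>) (Y \<omega>) \<tau>)"
  define V where "V = (\<lambda>\<omega>. (Z \<omega> - E (X \<omega>)) * G (X \<omega>, W \<omega>))"
  have mEX: "(\<lambda>\<omega>. E (X \<omega>)) \<in> borel_measurable M" using mE mX by measurable
  have mXW: "(\<lambda>\<omega>. (X \<omega>, W \<omega>)) \<in> measurable M (MX \<Otimes>\<^sub>M MW)" using mX mW by measurable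
  have mQz: "(\<lambda>\<omega>. Q (X \<omega>) (W \<omega>) z) \<in> borel_measurable M" for z
    using measurable_compose[OF mXW mQ[of z]] by simp
  have mGXW: "(\<lambda>\<omega>. G (X \<omega>, W \<omega>)) \<in> borel_measurable M"
    using measurable_compose[OF mXW mG] by simp
  have mps: "ps \<in> borel_measurable M" unfolding ps_def phi_def using mEX mQz mZ mY by measurable
  have mV: "V \<in> borel_measurable M" unfolding V_def using mZ mEX mGXW by simp
  have ps2': "integrable M (\<lambda>\<omega>. (ps \<omega>)\<^sup>2)" using ps2 unfolding ps_def .
  have aeV: "AE \<omega> in M. V \<omega> = \<psi> \<omega> + (-1) * ps \<omega>"
    using ae\<psi> by eventually_elim (simp add: V_def ps_def)
  have V2: "integrable M (\<lambda>\<omega>. (V \<omega>)\<^sup>2)"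
  proof -
    have "integrable M (\<lambda>\<omega>. (\<psi> \<omega> + (-1) * ps \<omega>)\<^sup>2)"
      by (rule l2_add[OF m\<psi> _ \<psi>2 l2_scale[OF ps2']]) (use mps in simp)
    then show ?thesis
      by (rule integrable_cong_AE_imp) (use mV aeV in \<open>auto elim: AE_mp\<close>)
  qed
  have iV: "integrable M V" by (rule l2_integrable[OF P mV V2])
  have iPV: "integrable M (\<lambda>\<omega>. ps \<omega> * V \<omega>)" by (rule l2_mult[OF mps mV ps2' V2])
  have int0: "(\<integral>\<omega>. ps \<omega> * V \<omega> \<partial>M) = 0"
    using cross_zero[OF P mX mW mZ Zb CI mE Ecorr epos mY iY mQ CE mG] iPV
    unfolding ps_def V_def by blast
  have Epos: "AE \<omega> in M. 0 \<le> E (X \<omega>)" using epos by eventually_elim simp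
  have intV: "(\<integral>\<omega>. V \<omega> \<partial>M) = 0"
    using K_orth[OF P mX mW mZ Zb CI mE Ecorr Epos mG] iV unfolding V_def by blast
  have "var_rv M \<psi> = var_rv M (\<lambda>\<omega>. ps \<omega> + V \<omega>)"
    by (rule var_rv_AE_cong) (use m\<psi> mps mV ae\<psi> in \<open>auto simp: ps_def V_def\<close>)
  also have "\<dots> = var_rv M ps + var_rv M V"
    by (rule var_rv_add[OF P mps mV ps2' V2]) (simp add: int0 intV)
  also have "\<dots> \<ge> var_rv M ps" using var_rv_nonneg[of M V] by simp
  finally show ?thesis unfolding ps_def by simp
qed

lemma fisher_rep:
  fixes S :: "'a \<Rightarrow> 'p::euclidean_space" and H :: "'p \<Rightarrow> 'p"
  assumes Sm: "S \<in> borel_measurable M" and S2: "integrable M (\<lambda>x. (norm (S x))\<^sup>2)"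
    and H: "H = (\<lambda>v. \<integral>x. (S x \<bullet> v) *\<^sub>R S x \<partial>M)"
    and Hb: "bij H"
  shows "D \<bullet> inv H s = inv H D \<bullet> s"
proof -
  have Sbm: "\<And>b. (\<lambda>x. S x \<bullet> b) \<in> borel_measurable M" using Sm by simp
  have Sb2: "\<And>b. integrable M (\<lambda>x. (S x \<bullet> b)\<^sup>2)" by (rule inner_sq_integrable[OF Sm S2])
  have iHv: "integrable M (\<lambda>x. (S x \<bullet> v) *\<^sub>R S x)" for v
  proof -
    have "integrable M (\<lambda>x. (S x \<bullet> v) *\<^sub>R S x)"
      by (rule l2_scaleR_integrable[OF Sm S2 Sbm Sb2])
    then show ?thesis .
  qed
  have Hinner: "H v \<bullet> u = (\<integral>x. (S x \<bullet> v) * (S x \<bullet> u) \<partial>M)" for u v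
  proof -
    have "H v \<bullet> u = (\<integral>x. ((S x \<bullet> v) *\<^sub>R S x) \<bullet> u \<partial>M)"
      unfolding H using iHv by (subst integral_inner_left) auto
    then show ?thesis by simp
  qed
  have Hsym: "H v \<bullet> u = H u \<bullet> v" for u v
    unfolding Hinner by (simp add: mult.commute)
  define a where "a = inv H D"
  have Ha: "H a = D" unfolding a_def using Hb by (simp add: bij_is_surj surj_f_inv_f)
  have "D \<bullet> inv H s = H a \<bullet> inv H s" by (simp add: Ha)
  also have "\<dots> = H (inv H s) \<bullet> a" by (rule Hsym)
  also have "H (inv H s) = s" using Hb by (simp add: bij_is_surj surj_f_inv_f)
  finally show ?thesis by (simp add: inner_commute a_def)
qed

lemma gradient_fst:
  fixes E2 :: "'p::euclidean_space \<times> 'q::euclidean_space \<Rightarrow> real"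
  assumes "E2 differentiable (at (a0, 0))"
  shows "gradient (\<lambda>a. E2 (a, 0)) a0 = fst (gradient E2 (a0, 0))"
proof -
  have d: "(E2 has_derivative (\<lambda>h. gradient E2 (a0, 0) \<bullet> h)) (at (a0, 0))"
    by (rule gradient_has_derivative[OF assms])
  have l: "((\<lambda>a. (a, 0::'q)) has_derivative (\<lambda>h. (h, 0))) (at a0)"
    by (auto intro!: derivative_eq_intros)
  have d': "(E2 has_derivative (\<lambda>h. gradient E2 (a0, 0) \<bullet> h)) (at ((\<lambda>a. (a, 0::'q)) a0))"
    using d by simp
  have "((\<lambda>a. E2 (a, 0)) has_derivative (\<lambda>h. gradient E2 (a0, 0) \<bullet> (h, 0))) (at a0)"
    using has_derivative_compose[OF l d'] by simp
  moreover have "(\<lambda>h. gradient E2 (a0, 0) \<bullet> (h, 0::'q)) = (\<lambda>h. fst (gradient E2 (a0, 0)) \<bullet> h)"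
    by (simp add: inner_Pair_0)
  ultimately show ?thesis by (intro gradient_eqI) simp
qed

lemma phi_shift:
  "phi e q1 q0 z y \<tau> = phi e p1 p0 z y \<tau> + (z - e) * ((p1 / e + p0 / (1 - e)) - (q1 / e + q0 / (1 - e)))"
  unfolding phi_def divide_inverse by (simp add: algebra_simps)

theorem theorem4:
  fixes M :: "'a measure"
    and X :: "'a \<Rightarrow> 'x" and MX :: "'x measure"
    and W :: "'a \<Rightarrow> 'w" and MW :: "'w measure"
    and Y Y0 Y1 Z :: "'a \<Rightarrow> real"
    and eX :: "'x \<Rightarrow> 'p::euclidean_space \<Rightarrow> real"
    and eW :: "'x \<Rightarrow> 'w \<Rightarrow> 'p \<Rightarrow> 'q::euclidean_space \<Rightarrow> real"
    and QX :: "'x \<Rightarrow> real \<Rightarrow> 'b::euclidean_space \<Rightarrow> real"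
    and QW :: "'x \<Rightarrow> 'w \<Rightarrow> real \<Rightarrow> 'b \<times> 'c::euclidean_space \<Rightarrow> real"
    and \<alpha>0 :: 'p
    and \<beta>fps \<beta>eps :: 'b
    and \<delta>fps \<delta>eps :: "'b \<times> 'c"
  assumes M: "prob_space M"
    and meas_X: "X \<in> measurable M MX"
    and meas_W: "W \<in> measurable M MW"
    and meas_Y0: "Y0 \<in> borel_measurable M"
    and meas_Y1: "Y1 \<in> borel_measurable M"
    and meas_Z: "Z \<in> borel_measurable M"
    and Z_binary: "\<forall>\<omega>\<in>space M. Z \<omega> = 0 \<or> Z \<omega> = 1"
    and Y_def: "\<forall>\<omega>\<in>space M. Y \<omega> = Z \<omega> * Y1 \<omega> + (1 - Z \<omega>) * Y0 \<omega>"
    \<comment> \<open>Assumption 1\<close>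
    and A1_ci: "cond_indep M Z borel (\<lambda>\<omega>. (Y0 \<omega>, Y1 \<omega>)) borel X MX"
    and A1_pos: "AE \<omega> in M. 0 < prop_score M X MX Z \<omega> \<and> prop_score M X MX Z \<omega> < 1"
    \<comment> \<open>Assumption 2\<close>
    and A2: "cond_indep M Z borel (\<lambda>\<omega>. (W \<omega>, Y0 \<omega>, Y1 \<omega>)) (MW \<Otimes>\<^sub>M borel) X MX"
    \<comment> \<open>nested propensity models, both correctly specified (gamma_0 = 0)\<close>
    and nested: "\<forall>x w a. eW x w a 0 = eX x a"
    and correct_X: "AE \<omega> in M. eX (X \<omega>) \<alpha>0 = prop_score M X MX Z \<omega>"
    \<comment> \<open>Assumption 3\<close>
    and A3: "(\<forall>\<beta>. \<forall>z\<in>{0,1}. AE \<omega> in M. QW (X \<omega>) (W \<omega>) z (\<beta>, 0) = QX (X \<omega>) z \<beta>)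
             \<or> (\<exists>\<delta>0. AE \<omega> in M. QW (X \<omega>) (W \<omega>) (Z \<omega>) \<delta>0
                    = cond_exp_given M (\<lambda>\<omega>. (X \<omega>, W \<omega>, Z \<omega>)) (MX \<Otimes>\<^sub>M MW \<Otimes>\<^sub>M borel) Y \<omega>)"
    \<comment> \<open>regularity: measurability of working models\<close>
    and meas_eX: "\<forall>a. (\<lambda>x. eX x a) \<in> borel_measurable MX"
    and meas_eW: "\<forall>a g. (\<lambda>(x, w). eW x w a g) \<in> borel_measurable (MX \<Otimes>\<^sub>M MW)"
    and meas_QX: "\<forall>z \<beta>. (\<lambda>x. QX x z \<beta>) \<in> borel_measurable MX"
    and meas_QW: "\<forall>z \<delta>. (\<lambda>(x, w). QW x w z \<delta>) \<in> borel_measurable (MX \<Otimes>\<^sub>M MW)"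
    \<comment> \<open>regularity: differentiability of the propensity models at the truth\<close>
    and diff_eX: "\<forall>x\<in>space MX. eX x differentiable (at \<alpha>0)"
    and diff_eW: "\<forall>x\<in>space MX. \<forall>w\<in>space MW.
                    (\<lambda>\<theta>. eW x w (fst \<theta>) (snd \<theta>)) differentiable (at (\<alpha>0, 0))"
    \<comment> \<open>regularity: moments exist, information matrices are invertible\<close>
    and int_Y0: "integrable M (\<lambda>\<omega>. (Y0 \<omega>)\<^sup>2)"
    and int_Y1: "integrable M (\<lambda>\<omega>. (Y1 \<omega>)\<^sup>2)"
    and int_phiX: "\<forall>\<beta>. integrable M (\<lambda>\<omega>. (phi_X M eX QX X Z Y Y0 Y1 \<beta> \<alpha>0 \<omega>)\<^sup>2)"
    and int_phiW: "\<forall>\<delta>. integrable M (\<lambda>\<omega>. (phi_W M eW QW X W Z Y Y0 Y1 \<delta> (\<alpha>0, 0) \<omega>)\<^sup>2)"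
    and int_dphiX: "\<forall>\<beta>. integrable M (\<lambda>\<omega>. gradient (\<lambda>a. phi_X M eX QX X Z Y Y0 Y1 \<beta> a \<omega>) \<alpha>0)"
    and int_dphiW: "\<forall>\<delta>. integrable M
                      (\<lambda>\<omega>. gradient (\<lambda>\<theta>. phi_W M eW QW X W Z Y Y0 Y1 \<delta> \<theta> \<omega>) (\<alpha>0, 0))"
    and int_SX: "integrable M (\<lambda>\<omega>. (norm (score (ll_X eX X Z) \<alpha>0 \<omega>))\<^sup>2)"
    and int_SW: "integrable M (\<lambda>\<omega>. (norm (score (ll_W eW X W Z) (\<alpha>0, 0) \<omega>))\<^sup>2)"
    and inv_HX: "bij (fisher_info M (ll_X eX X Z) \<alpha>0)"
    and inv_HW: "bij (fisher_info M (ll_W eW X W Z) (\<alpha>0, 0))"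
    \<comment> \<open>the four minimizers\<close>
    and min_Xfps: "\<forall>\<beta>. Sigma_fps M (phi_X M eX QX X Z Y Y0 Y1 \<beta>fps) \<alpha>0
                      \<le> Sigma_fps M (phi_X M eX QX X Z Y Y0 Y1 \<beta>) \<alpha>0"
    and min_Xeps: "\<forall>\<beta>. Sigma_eps M (phi_X M eX QX X Z Y Y0 Y1 \<beta>eps) (ll_X eX X Z) \<alpha>0
                      \<le> Sigma_eps M (phi_X M eX QX X Z Y Y0 Y1 \<beta>) (ll_X eX X Z) \<alpha>0"
    and min_Wfps: "\<forall>\<delta>. Sigma_fps M (phi_W M eW QW X W Z Y Y0 Y1 \<delta>fps) (\<alpha>0, 0)
                      \<le> Sigma_fps M (phi_W M eW QW X W Z Y Y0 Y1 \<delta>) (\<alpha>0, 0)"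
    and min_Weps: "\<forall>\<delta>. Sigma_eps M (phi_W M eW QW X W Z Y Y0 Y1 \<delta>eps) (ll_W eW X W Z) (\<alpha>0, 0)
                      \<le> Sigma_eps M (phi_W M eW QW X W Z Y Y0 Y1 \<delta>) (ll_W eW X W Z) (\<alpha>0, 0)"
  shows "Sigma_eps M (phi_W M eW QW X W Z Y Y0 Y1 \<delta>eps) (ll_W eW X W Z) (\<alpha>0, 0)
           \<le> Sigma_eps M (phi_X M eX QX X Z Y Y0 Y1 \<beta>eps) (ll_X eX X Z) \<alpha>0
       \<and> Sigma_eps M (phi_X M eX QX X Z Y Y0 Y1 \<beta>eps) (ll_X eX X Z) \<alpha>0
           \<le> Sigma_fps M (phi_X M eX QX X Z Y Y0 Y1 \<beta>fps) \<alpha>0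
       \<and> Sigma_eps M (phi_W M eW QW X W Z Y Y0 Y1 \<delta>eps) (ll_W eW X W Z) (\<alpha>0, 0)
           \<le> Sigma_fps M (phi_W M eW QW X W Z Y Y0 Y1 \<delta>fps) (\<alpha>0, 0)
       \<and> Sigma_fps M (phi_W M eW QW X W Z Y Y0 Y1 \<delta>fps) (\<alpha>0, 0)
           \<le> Sigma_fps M (phi_X M eX QX X Z Y Y0 Y1 \<beta>fps) \<alpha>0"
proof -
  interpret prob_space M by (rule M)
  define \<tau> where "\<tau> = ate M Y0 Y1"
  define E where "E = (\<lambda>x. eX x \<alpha>0)"
  have mE[measurable]: "E \<in> borel_measurable MX" using meas_eX unfolding E_def by blast
  have mX[measurable]: "X \<in> measurable M MX" by (rule meas_X)
  have mW[measurable]: "W \<in> measurable M MW" by (rule meas_W)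
  have mZ[measurable]: "Z \<in> borel_measurable M" by (rule meas_Z)
  have Ecorr: "AE \<omega> in M. E (X \<omega>) = prop_score M X MX Z \<omega>" using correct_X unfolding E_def .
  have epos: "AE \<omega> in M. 0 < E (X \<omega>) \<and> E (X \<omega>) < 1"
    using correct_X A1_pos by eventually_elim (auto simp: E_def)
  have Epos0: "AE \<omega> in M. 0 \<le> E (X \<omega>)" using epos by eventually_elim simp
  have Korth: "\<And>Gf. Gf \<in> borel_measurable (MX \<Otimes>\<^sub>M MW) \<Longrightarrow>
      integrable M (\<lambda>\<omega>. (Z \<omega> - E (X \<omega>)) * Gf (X \<omega>, W \<omega>)) \<Longrightarrow>
      (\<integral>\<omega>. (Z \<omega> - E (X \<omega>)) * Gf (X \<omega>, W \<omega>) \<partial>M) = 0"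
    using K_orth[OF M meas_X meas_W meas_Z Z_binary A2 mE Ecorr Epos0] by blast
  have mY[measurable]: "Y \<in> borel_measurable M"
  proof -
    have "(\<lambda>\<omega>. Z \<omega> * Y1 \<omega> + (1 - Z \<omega>) * Y0 \<omega>) \<in> borel_measurable M"
      using meas_Z meas_Y0 meas_Y1 by measurable
    then show ?thesis by (subst measurable_cong[where g="\<lambda>\<omega>. Z \<omega> * Y1 \<omega> + (1 - Z \<omega>) * Y0 \<omega>"]) (use Y_def in auto)
  qed
  have iY: "integrable M Y"
  proof -
    have i1: "integrable M Y1" by (rule l2_integrable[OF M meas_Y1 int_Y1])
    have i0: "integrable M Y0" by (rule l2_integrable[OF M meas_Y0 int_Y0])
    have "integrable M (\<lambda>\<omega>. Z \<omega> * Y1 \<omega>)"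
      by (rule bounded_times_integrable[OF i1 meas_Z, where B=1]) (use Z_binary in auto)
    moreover have "integrable M (\<lambda>\<omega>. (1 - Z \<omega>) * Y0 \<omega>)"
      by (rule bounded_times_integrable[OF i0, where B=1]) (use Z_binary meas_Z in auto)
    ultimately have "integrable M (\<lambda>\<omega>. Z \<omega> * Y1 \<omega> + (1 - Z \<omega>) * Y0 \<omega>)" by simp
    moreover have "integrable M Y \<longleftrightarrow> integrable M (\<lambda>\<omega>. Z \<omega> * Y1 \<omega> + (1 - Z \<omega>) * Y0 \<omega>)"
      by (rule Bochner_Integration.integrable_cong) (use Y_def in auto)
    ultimately show ?thesis by simp
  qed
  have mGX[measurable]: "(\<lambda>x. gradient (eX x) \<alpha>0) \<in> borel_measurable MX"
    by (rule measurable_gradient[OF diff_eX meas_eX])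
  define EW where "EW = (\<lambda>(p :: 'x \<times> 'w) (\<theta> :: 'p \<times> 'q). eW (fst p) (snd p) (fst \<theta>) (snd \<theta>))"
  have mGW[measurable]: "(\<lambda>p. gradient (EW p) (\<alpha>0, 0)) \<in> borel_measurable (MX \<Otimes>\<^sub>M MW)"
  proof (rule measurable_gradient)
    show "\<forall>p\<in>space (MX \<Otimes>\<^sub>M MW). EW p differentiable at (\<alpha>0, 0)"
      using diff_eW unfolding EW_def by (auto simp: space_pair_measure)
    show "\<forall>\<theta>. (\<lambda>p. EW p \<theta>) \<in> borel_measurable (MX \<Otimes>\<^sub>M MW)"
    proof
      fix \<theta> :: "'p \<times> 'q"
      have "(\<lambda>(x, w). eW x w (fst \<theta>) (snd \<theta>)) \<in> borel_measurable (MX \<Otimes>\<^sub>M MW)" using meas_eW by blast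
      then show "(\<lambda>p. EW p \<theta>) \<in> borel_measurable (MX \<Otimes>\<^sub>M MW)" unfolding EW_def by (simp add: split_beta')
    qed
  qed
  have mQX[measurable]: "(\<lambda>x. QX x z b) \<in> borel_measurable MX" for z b using meas_QX by blast
  have mQW[measurable]: "(\<lambda>p. QW (fst p) (snd p) z d) \<in> borel_measurable (MX \<Otimes>\<^sub>M MW)" for z d
  proof -
    have "(\<lambda>(x, w). QW x w z d) \<in> borel_measurable (MX \<Otimes>\<^sub>M MW)" using meas_QW by blast
    then show ?thesis by (simp add: split_beta')
  qed
  have mXW[measurable]: "(\<lambda>\<omega>. (X \<omega>, W \<omega>)) \<in> measurable M (MX \<Otimes>\<^sub>M MW)" by measurable
  have EWX: "EW (X \<omega>, W \<omega>) (\<alpha>0, 0) = E (X \<omega>)" for \<omega>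
    unfolding EW_def E_def using nested by simp

  have lX: "ll_X eX X Z = (\<lambda>\<theta> \<omega>. loglik ((\<lambda>\<omega>. eX (X \<omega>)) \<omega> \<theta>) (Z \<omega>))"
    unfolding ll_X_def by simp
  have phX: "phi_X M eX QX X Z Y Y0 Y1 \<beta> = (\<lambda>\<theta> \<omega>. phi ((\<lambda>\<omega>. eX (X \<omega>)) \<omega> \<theta>) ((\<lambda>\<omega>. QX (X \<omega>) 1 \<beta>) \<omega>)
      ((\<lambda>\<omega>. QX (X \<omega>) 0 \<beta>) \<omega>) (Z \<omega>) (Y \<omega>) \<tau>)" for \<beta>
    unfolding phi_X_def \<tau>_def by simp
  have diffX: "\<forall>\<omega>\<in>space M. (\<lambda>\<omega>. eX (X \<omega>)) \<omega> differentiable (at \<alpha>0)"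
    using diff_eX measurable_space[OF meas_X] by auto
  have eposX: "AE \<omega> in M. 0 < (\<lambda>\<omega>. eX (X \<omega>)) \<omega> \<alpha>0 \<and> (\<lambda>\<omega>. eX (X \<omega>)) \<omega> \<alpha>0 < 1"
    using epos unfolding E_def by simp
  have mEX: "(\<lambda>\<omega>. (\<lambda>\<omega>. eX (X \<omega>)) \<omega> \<alpha>0) \<in> borel_measurable M"
    using mE unfolding E_def by simp
  have mGXo: "(\<lambda>\<omega>. gradient ((\<lambda>\<omega>. eX (X \<omega>)) \<omega>) \<alpha>0) \<in> borel_measurable M" by simp
  have orthSX: "(\<integral>\<omega>. (Z \<omega> - (\<lambda>\<omega>. eX (X \<omega>)) \<omega> \<alpha>0) * ((gradient ((\<lambda>\<omega>. eX (X \<omega>)) \<omega>) \<alpha>0 \<bullet> b)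
        / ((\<lambda>\<omega>. eX (X \<omega>)) \<omega> \<alpha>0 * (1 - (\<lambda>\<omega>. eX (X \<omega>)) \<omega> \<alpha>0))) \<partial>M) = 0"
    if "integrable M (\<lambda>\<omega>. (Z \<omega> - (\<lambda>\<omega>. eX (X \<omega>)) \<omega> \<alpha>0) * ((gradient ((\<lambda>\<omega>. eX (X \<omega>)) \<omega>) \<alpha>0 \<bullet> b)
        / ((\<lambda>\<omega>. eX (X \<omega>)) \<omega> \<alpha>0 * (1 - (\<lambda>\<omega>. eX (X \<omega>)) \<omega> \<alpha>0))))" for b
  proof -
    have m: "(\<lambda>p. (gradient (eX (fst p)) \<alpha>0 \<bullet> b) / (E (fst p) * (1 - E (fst p)))) \<in> borel_measurable (MX \<Otimes>\<^sub>M MW)"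
      by measurable
    show ?thesis using Korth[OF m] that unfolding E_def by simp
  qed
  have orthDX: "(\<integral>\<omega>. (Z \<omega> - (\<lambda>\<omega>. eX (X \<omega>)) \<omega> \<alpha>0) * (((\<lambda>\<omega>. QX (X \<omega>) 1 \<beta>) \<omega> - (\<lambda>\<omega>. QX (X \<omega>) 0 \<beta>) \<omega> - \<tau>)
        * ((gradient ((\<lambda>\<omega>. eX (X \<omega>)) \<omega>) \<alpha>0 \<bullet> b)
        / ((\<lambda>\<omega>. eX (X \<omega>)) \<omega> \<alpha>0 * (1 - (\<lambda>\<omega>. eX (X \<omega>)) \<omega> \<alpha>0)))) \<partial>M) = 0"
    if "integrable M (\<lambda>\<omega>. (Z \<omega> - (\<lambda>\<omega>. eX (X \<omega>)) \<omega> \<alpha>0) * (((\<lambda>\<omega>. QX (X \<omega>) 1 \<beta>) \<omega> - (\<lambda>\<omega>. QX (X \<omega>) 0 \<beta>) \<omega> - \<tau>)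
        * ((gradient ((\<lambda>\<omega>. eX (X \<omega>)) \<omega>) \<alpha>0 \<bullet> b)
        / ((\<lambda>\<omega>. eX (X \<omega>)) \<omega> \<alpha>0 * (1 - (\<lambda>\<omega>. eX (X \<omega>)) \<omega> \<alpha>0)))))" for b \<beta>
  proof -
    have m: "(\<lambda>p. (QX (fst p) 1 \<beta> - QX (fst p) 0 \<beta> - \<tau>) * ((gradient (eX (fst p)) \<alpha>0 \<bullet> b) / (E (fst p) * (1 - E (fst p))))) \<in> borel_measurable (MX \<Otimes>\<^sub>M MW)"
      by measurable
    show ?thesis using Korth[OF m] that unfolding E_def by simp
  qed
  have PX: "Sigma_eps M (phi_X M eX QX X Z Y Y0 Y1 \<beta>) (ll_X eX X Z) \<alpha>0
      \<le> var_rv M (\<lambda>\<omega>. phi_X M eX QX X Z Y Y0 Y1 \<beta> \<alpha>0 \<omega> - c \<bullet> score (ll_X eX X Z) \<alpha>0 \<omega>)" for \<beta> c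
  proof (rule dr_package[OF M Z_binary meas_Z mY _ _ diffX mEX mGXo eposX lX phX int_SX inv_HX])
    show "(\<lambda>\<omega>. QX (X \<omega>) 1 \<beta>) \<in> borel_measurable M" by measurable
    show "(\<lambda>\<omega>. QX (X \<omega>) 0 \<beta>) \<in> borel_measurable M" by measurable
    show "integrable M (\<lambda>\<omega>. (phi_X M eX QX X Z Y Y0 Y1 \<beta> \<alpha>0 \<omega>)\<^sup>2)" using int_phiX by blast
    show "integrable M (\<lambda>\<omega>. gradient (\<lambda>\<theta>. phi_X M eX QX X Z Y Y0 Y1 \<beta> \<theta> \<omega>) \<alpha>0)" using int_dphiX by blast
  qed (rule orthSX, assumption, rule orthDX, assumption)

  define EfW where "EfW = (\<lambda>\<omega> (\<theta> :: 'p \<times> 'q). eW (X \<omega>) (W \<omega>) (fst \<theta>) (snd \<theta>))"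
  have EfW0: "EfW \<omega> (\<alpha>0, 0) = E (X \<omega>)" for \<omega>
    unfolding EfW_def E_def using nested by simp
  have lW: "ll_W eW X W Z = (\<lambda>\<theta> \<omega>. loglik (EfW \<omega> \<theta>) (Z \<omega>))"
    unfolding ll_W_def EfW_def by simp
  have phW: "phi_W M eW QW X W Z Y Y0 Y1 \<delta> = (\<lambda>\<theta> \<omega>. phi (EfW \<omega> \<theta>) ((\<lambda>\<omega>. QW (X \<omega>) (W \<omega>) 1 \<delta>) \<omega>)
      ((\<lambda>\<omega>. QW (X \<omega>) (W \<omega>) 0 \<delta>) \<omega>) (Z \<omega>) (Y \<omega>) \<tau>)" for \<delta>
    unfolding phi_W_def \<tau>_def EfW_def by simp
  have diffW: "\<forall>\<omega>\<in>space M. EfW \<omega> differentiable (at (\<alpha>0, 0))"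
    using diff_eW measurable_space[OF meas_X] measurable_space[OF meas_W] unfolding EfW_def by auto
  have eposW: "AE \<omega> in M. 0 < EfW \<omega> (\<alpha>0, 0) \<and> EfW \<omega> (\<alpha>0, 0) < 1"
    using epos unfolding EfW0 .
  have mEW: "(\<lambda>\<omega>. EfW \<omega> (\<alpha>0, 0)) \<in> borel_measurable M"
    unfolding EfW0 by measurable
  have gEfW: "gradient (EfW \<omega>) (\<alpha>0, 0) = gradient (EW (X \<omega>, W \<omega>)) (\<alpha>0, 0)" for \<omega>
    unfolding EfW_def EW_def by simp
  have mGWo: "(\<lambda>\<omega>. gradient (EfW \<omega>) (\<alpha>0, 0)) \<in> borel_measurable M"
    unfolding gEfW by measurable
  have orthSW: "(\<integral>\<omega>. (Z \<omega> - EfW \<omega> (\<alpha>0, 0)) * ((gradient (EfW \<omega>) (\<alpha>0, 0) \<bullet> b)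
        / (EfW \<omega> (\<alpha>0, 0) * (1 - EfW \<omega> (\<alpha>0, 0)))) \<partial>M) = 0"
    if "integrable M (\<lambda>\<omega>. (Z \<omega> - EfW \<omega> (\<alpha>0, 0)) * ((gradient (EfW \<omega>) (\<alpha>0, 0) \<bullet> b)
        / (EfW \<omega> (\<alpha>0, 0) * (1 - EfW \<omega> (\<alpha>0, 0)))))" for b
  proof -
    have m: "(\<lambda>p. (gradient (EW p) (\<alpha>0, 0) \<bullet> b) / (E (fst p) * (1 - E (fst p)))) \<in> borel_measurable (MX \<Otimes>\<^sub>M MW)"
      by measurable
    show ?thesis using Korth[OF m] that unfolding EfW0 gEfW by simp
  qed
  have orthDW: "(\<integral>\<omega>. (Z \<omega> - EfW \<omega> (\<alpha>0, 0)) * (((\<lambda>\<omega>. QW (X \<omega>) (W \<omega>) 1 \<delta>) \<omega> - (\<lambda>\<omega>. QW (X \<omega>) (W \<omega>) 0 \<delta>) \<omega> - \<tau>)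
        * ((gradient (EfW \<omega>) (\<alpha>0, 0) \<bullet> b)
        / (EfW \<omega> (\<alpha>0, 0) * (1 - EfW \<omega> (\<alpha>0, 0))))) \<partial>M) = 0"
    if "integrable M (\<lambda>\<omega>. (Z \<omega> - EfW \<omega> (\<alpha>0, 0)) * (((\<lambda>\<omega>. QW (X \<omega>) (W \<omega>) 1 \<delta>) \<omega> - (\<lambda>\<omega>. QW (X \<omega>) (W \<omega>) 0 \<delta>) \<omega> - \<tau>)
        * ((gradient (EfW \<omega>) (\<alpha>0, 0) \<bullet> b)
        / (EfW \<omega> (\<alpha>0, 0) * (1 - EfW \<omega> (\<alpha>0, 0))))))" for b \<delta>
  proof -
    have m: "(\<lambda>p. (QW (fst p) (snd p) 1 \<delta> - QW (fst p) (snd p) 0 \<delta> - \<tau>) * ((gradient (EW p) (\<alpha>0, 0) \<bullet> b) / (E (fst p) * (1 - E (fst p))))) \<in> borel_measurable (MX \<Otimes>\<^sub>M MW)"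
      by measurable
    show ?thesis using Korth[OF m] that unfolding EfW0 gEfW by simp
  qed
  have PW: "Sigma_eps M (phi_W M eW QW X W Z Y Y0 Y1 \<delta>) (ll_W eW X W Z) (\<alpha>0, 0)
      \<le> var_rv M (\<lambda>\<omega>. phi_W M eW QW X W Z Y Y0 Y1 \<delta> (\<alpha>0, 0) \<omega> - c \<bullet> score (ll_W eW X W Z) (\<alpha>0, 0) \<omega>)" for \<delta> c
  proof (rule dr_package[OF M Z_binary meas_Z mY _ _ diffW mEW mGWo eposW lW phW int_SW inv_HW])
    show "(\<lambda>\<omega>. QW (X \<omega>) (W \<omega>) 1 \<delta>) \<in> borel_measurable M"
      using measurable_compose[OF mXW mQW[of 1 \<delta>]] by simp
    show "(\<lambda>\<omega>. QW (X \<omega>) (W \<omega>) 0 \<delta>) \<in> borel_measurable M"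
      using measurable_compose[OF mXW mQW[of 0 \<delta>]] by simp
    show "integrable M (\<lambda>\<omega>. (phi_W M eW QW X W Z Y Y0 Y1 \<delta> (\<alpha>0, 0) \<omega>)\<^sup>2)" using int_phiW by blast
    show "integrable M (\<lambda>\<omega>. gradient (\<lambda>\<theta>. phi_W M eW QW X W Z Y Y0 Y1 \<delta> \<theta> \<omega>) (\<alpha>0, 0))" using int_dphiW by blast
  qed (rule orthSW, assumption, rule orthDW, assumption)
  have c0: "\<And>f (S :: 'a \<Rightarrow> 'r::euclidean_space). (\<lambda>\<omega>. f \<omega> - (0::'r) \<bullet> S \<omega>) = f" by simp
  have epsfpsX: "Sigma_eps M (phi_X M eX QX X Z Y Y0 Y1 \<beta>) (ll_X eX X Z) \<alpha>0
      \<le> Sigma_fps M (phi_X M eX QX X Z Y Y0 Y1 \<beta>) \<alpha>0" for \<beta>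
    using PX[of \<beta> 0] unfolding Sigma_fps_def by simp
  have epsfpsW: "Sigma_eps M (phi_W M eW QW X W Z Y Y0 Y1 \<delta>) (ll_W eW X W Z) (\<alpha>0, 0)
      \<le> Sigma_fps M (phi_W M eW QW X W Z Y Y0 Y1 \<delta>) (\<alpha>0, 0)" for \<delta>
    using PW[of \<delta> 0] unfolding Sigma_fps_def by simp
  have C2: "Sigma_eps M (phi_X M eX QX X Z Y Y0 Y1 \<beta>eps) (ll_X eX X Z) \<alpha>0
           \<le> Sigma_fps M (phi_X M eX QX X Z Y Y0 Y1 \<beta>fps) \<alpha>0"
    using min_Xeps epsfpsX[of \<beta>fps] by (meson order_trans)
  have C3: "Sigma_eps M (phi_W M eW QW X W Z Y Y0 Y1 \<delta>eps) (ll_W eW X W Z) (\<alpha>0, 0)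
           \<le> Sigma_fps M (phi_W M eW QW X W Z Y Y0 Y1 \<delta>fps) (\<alpha>0, 0)"
    using min_Weps epsfpsW[of \<delta>fps] by (meson order_trans)

  have mSX: "score (ll_X eX X Z) \<alpha>0 \<in> borel_measurable M"
    by (rule score_meas[OF Z_binary meas_Z diffX mEX mGXo _ lX]) (use int_SX in auto)
  have mSW: "score (ll_W eW X W Z) (\<alpha>0, 0) \<in> borel_measurable M"
    by (rule score_meas[OF Z_binary meas_Z diffW mEW mGWo _ lW]) (use int_SW in auto)
  have SXae: "AE \<omega> in M. score (ll_X eX X Z) \<alpha>0 \<omega> = ((Z \<omega> - E (X \<omega>)) / (E (X \<omega>) * (1 - E (X \<omega>)))) *\<^sub>R gradient (eX (X \<omega>)) \<alpha>0"
    using score_AE[OF Z_binary diffX eposX lX] unfolding E_def by simp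
  have SWae: "AE \<omega> in M. score (ll_W eW X W Z) (\<alpha>0, 0) \<omega> = ((Z \<omega> - E (X \<omega>)) / (E (X \<omega>) * (1 - E (X \<omega>)))) *\<^sub>R gradient (EfW \<omega>) (\<alpha>0, 0)"
    using score_AE[OF Z_binary diffW eposW lW] unfolding EfW0 by simp
  have HX: "fisher_info M (ll_X eX X Z) \<alpha>0 = (\<lambda>v. \<integral>x. (score (ll_X eX X Z) \<alpha>0 x \<bullet> v) *\<^sub>R score (ll_X eX X Z) \<alpha>0 x \<partial>M)"
    unfolding fisher_info_def by (rule ext) simp
  define aX where "aX = (\<lambda>\<beta>. inv (fisher_info M (ll_X eX X Z) \<alpha>0) (Dmat M (phi_X M eX QX X Z Y Y0 Y1 \<beta>) \<alpha>0))"
  have epsX_rep: "Sigma_eps M (phi_X M eX QX X Z Y Y0 Y1 \<beta>) (ll_X eX X Z) \<alpha>0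
      = var_rv M (\<lambda>\<omega>. phi_X M eX QX X Z Y Y0 Y1 \<beta> \<alpha>0 \<omega> - aX \<beta> \<bullet> score (ll_X eX X Z) \<alpha>0 \<omega>)" for \<beta>
    unfolding Sigma_eps_def aX_def fisher_rep[OF mSX int_SX HX inv_HX] ..
  have mphX: "phi_X M eX QX X Z Y Y0 Y1 \<beta> \<alpha>0 \<in> borel_measurable M" for \<beta>
  proof -
    have e: "phi_X M eX QX X Z Y Y0 Y1 \<beta> \<alpha>0 = (\<lambda>\<omega>. phi (E (X \<omega>)) (QX (X \<omega>) 1 \<beta>) (QX (X \<omega>) 0 \<beta>) (Z \<omega>) (Y \<omega>) \<tau>)"
      unfolding phi_X_def \<tau>_def E_def by simp
    show ?thesis unfolding e phi_def by measurable
  qed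
  have mphW: "phi_W M eW QW X W Z Y Y0 Y1 \<delta> (\<alpha>0, 0) \<in> borel_measurable M" for \<delta>
  proof -
    have e: "phi_W M eW QW X W Z Y Y0 Y1 \<delta> (\<alpha>0, 0) = (\<lambda>\<omega>. phi (E (X \<omega>)) (QW (X \<omega>) (W \<omega>) 1 \<delta>) (QW (X \<omega>) (W \<omega>) 0 \<delta>) (Z \<omega>) (Y \<omega>) \<tau>)"
      unfolding phi_W_def \<tau>_def E_def using nested by simp
    have m1: "(\<lambda>\<omega>. QW (X \<omega>) (W \<omega>) z \<delta>) \<in> borel_measurable M" for z
      using measurable_compose[OF mXW mQW[of z \<delta>]] by simp
    show ?thesis unfolding e phi_def using m1 by measurable
  qed

  have C14: "Sigma_eps M (phi_W M eW QW X W Z Y Y0 Y1 \<delta>eps) (ll_W eW X W Z) (\<alpha>0, 0)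
           \<le> Sigma_eps M (phi_X M eX QX X Z Y Y0 Y1 \<beta>eps) (ll_X eX X Z) \<alpha>0
       \<and> Sigma_fps M (phi_W M eW QW X W Z Y Y0 Y1 \<delta>fps) (\<alpha>0, 0)
           \<le> Sigma_fps M (phi_X M eX QX X Z Y Y0 Y1 \<beta>fps) \<alpha>0"
    using A3
  proof
    assume A3i: "\<forall>\<beta>. \<forall>z\<in>{0,1}. AE \<omega> in M. QW (X \<omega>) (W \<omega>) z (\<beta>, 0) = QX (X \<omega>) z \<beta>"
    have eqph: "AE \<omega> in M. phi_W M eW QW X W Z Y Y0 Y1 (\<beta>, 0) (\<alpha>0, 0) \<omega> = phi_X M eX QX X Z Y Y0 Y1 \<beta> \<alpha>0 \<omega>" for \<beta>
    proof -
      have a1: "AE \<omega> in M. QW (X \<omega>) (W \<omega>) 1 (\<beta>, 0) = QX (X \<omega>) 1 \<beta>" using A3i by blast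
      have a0: "AE \<omega> in M. QW (X \<omega>) (W \<omega>) 0 (\<beta>, 0) = QX (X \<omega>) 0 \<beta>" using A3i by blast
      from a1 a0 show ?thesis
        by eventually_elim (simp add: phi_W_def phi_X_def nested)
    qed
    have F: "Sigma_fps M (phi_W M eW QW X W Z Y Y0 Y1 (\<beta>, 0)) (\<alpha>0, 0) = Sigma_fps M (phi_X M eX QX X Z Y Y0 Y1 \<beta>) \<alpha>0" for \<beta>
      unfolding Sigma_fps_def by (rule var_rv_AE_cong[OF mphW mphX eqph])
    have C4: "Sigma_fps M (phi_W M eW QW X W Z Y Y0 Y1 \<delta>fps) (\<alpha>0, 0) \<le> Sigma_fps M (phi_X M eX QX X Z Y Y0 Y1 \<beta>fps) \<alpha>0"
      using min_Wfps F[of \<beta>fps] by metis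
    have gfst: "gradient (eX (X \<omega>)) \<alpha>0 = fst (gradient (EfW \<omega>) (\<alpha>0, 0))" if w: "\<omega> \<in> space M" for \<omega>
    proof -
      have d: "EfW \<omega> differentiable (at (\<alpha>0, 0))" using diffW w by blast
      have "(\<lambda>a. EfW \<omega> (a, 0)) = eX (X \<omega>)" unfolding EfW_def using nested by (intro ext) simp
      then show ?thesis using gradient_fst[OF d] by simp
    qed
    define a where "a = aX \<beta>eps"
    have eqS: "AE \<omega> in M. phi_W M eW QW X W Z Y Y0 Y1 (\<beta>eps, 0) (\<alpha>0, 0) \<omega> - (a, 0) \<bullet> score (ll_W eW X W Z) (\<alpha>0, 0) \<omega>
        = phi_X M eX QX X Z Y Y0 Y1 \<beta>eps \<alpha>0 \<omega> - a \<bullet> score (ll_X eX X Z) \<alpha>0 \<omega>"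
      using eqph[of \<beta>eps] SXae SWae AE_space
    proof eventually_elim
      case (elim \<omega>)
      then show ?case using gfst[of \<omega>] by (simp add: inner_commute[of "(a, 0)"] inner_Pair_0 inner_commute[of a])
    qed
    have "Sigma_eps M (phi_W M eW QW X W Z Y Y0 Y1 \<delta>eps) (ll_W eW X W Z) (\<alpha>0, 0)
        \<le> Sigma_eps M (phi_W M eW QW X W Z Y Y0 Y1 (\<beta>eps, 0)) (ll_W eW X W Z) (\<alpha>0, 0)"
      using min_Weps by blast
    also have "\<dots> \<le> var_rv M (\<lambda>\<omega>. phi_W M eW QW X W Z Y Y0 Y1 (\<beta>eps, 0) (\<alpha>0, 0) \<omega> - (a, 0) \<bullet> score (ll_W eW X W Z) (\<alpha>0, 0) \<omega>)"
      by (rule PW)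
    also have "\<dots> = var_rv M (\<lambda>\<omega>. phi_X M eX QX X Z Y Y0 Y1 \<beta>eps \<alpha>0 \<omega> - a \<bullet> score (ll_X eX X Z) \<alpha>0 \<omega>)"
      by (rule var_rv_AE_cong[OF _ _ eqS]) (use mphW mphX mSW mSX in auto)
    also have "\<dots> = Sigma_eps M (phi_X M eX QX X Z Y Y0 Y1 \<beta>eps) (ll_X eX X Z) \<alpha>0"
      unfolding epsX_rep a_def ..
    finally show ?thesis using C4 by simp
  next
    assume "\<exists>\<delta>0. AE \<omega> in M. QW (X \<omega>) (W \<omega>) (Z \<omega>) \<delta>0
                    = cond_exp_given M (\<lambda>\<omega>. (X \<omega>, W \<omega>, Z \<omega>)) (MX \<Otimes>\<^sub>M MW \<Otimes>\<^sub>M borel) Y \<omega>"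
    then obtain \<delta>0 where CE: "AE \<omega> in M. QW (X \<omega>) (W \<omega>) (Z \<omega>) \<delta>0
                    = cond_exp_given M (\<lambda>\<omega>. (X \<omega>, W \<omega>, Z \<omega>)) (MX \<Otimes>\<^sub>M MW \<Otimes>\<^sub>M borel) Y \<omega>" by blast
    define Q where "Q = (\<lambda>x w z. QW x w z \<delta>0)"
    have mQ: "(\<lambda>p. Q (fst p) (snd p) z) \<in> borel_measurable (MX \<Otimes>\<^sub>M MW)" for z
      unfolding Q_def by (rule mQW)
    have CE': "AE \<omega> in M. Q (X \<omega>) (W \<omega>) (Z \<omega>)
                    = cond_exp_given M (\<lambda>\<omega>. (X \<omega>, W \<omega>, Z \<omega>)) (MX \<Otimes>\<^sub>M MW \<Otimes>\<^sub>M borel) Y \<omega>"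
      using CE unfolding Q_def .
    have phs: "phi_W M eW QW X W Z Y Y0 Y1 \<delta>0 (\<alpha>0, 0) = (\<lambda>\<omega>. phi (E (X \<omega>)) (Q (X \<omega>) (W \<omega>) 1) (Q (X \<omega>) (W \<omega>) 0) (Z \<omega>) (Y \<omega>) \<tau>)"
      unfolding phi_W_def \<tau>_def E_def Q_def using nested by simp
    have ps2: "integrable M (\<lambda>\<omega>. (phi (E (X \<omega>)) (Q (X \<omega>) (W \<omega>) 1) (Q (X \<omega>) (W \<omega>) 0) (Z \<omega>) (Y \<omega>) \<tau>)\<^sup>2)"
      using int_phiW[rule_format, of \<delta>0] unfolding phs .
    have phX': "phi_X M eX QX X Z Y Y0 Y1 \<beta> \<alpha>0 = (\<lambda>\<omega>. phi (E (X \<omega>)) (QX (X \<omega>) 1 \<beta>) (QX (X \<omega>) 0 \<beta>) (Z \<omega>) (Y \<omega>) \<tau>)" for \<beta>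
      unfolding phi_X_def \<tau>_def E_def by simp
    define Gs where "Gs = (\<lambda>\<beta> (p :: 'x \<times> 'w). (Q (fst p) (snd p) 1 / E (fst p) + Q (fst p) (snd p) 0 / (1 - E (fst p)))
        - (QX (fst p) 1 \<beta> / E (fst p) + QX (fst p) 0 \<beta> / (1 - E (fst p))))"
    have mGs: "Gs \<beta> \<in> borel_measurable (MX \<Otimes>\<^sub>M MW)" for \<beta>
      unfolding Gs_def using mQ by measurable
    have shift: "phi_X M eX QX X Z Y Y0 Y1 \<beta> \<alpha>0 \<omega> = phi (E (X \<omega>)) (Q (X \<omega>) (W \<omega>) 1) (Q (X \<omega>) (W \<omega>) 0) (Z \<omega>) (Y \<omega>) \<tau>
        + (Z \<omega> - E (X \<omega>)) * Gs \<beta> (X \<omega>, W \<omega>)" for \<beta> \<omega>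
      unfolding phX' Gs_def using phi_shift[of "E (X \<omega>)" "QX (X \<omega>) 1 \<beta>" "QX (X \<omega>) 0 \<beta>" "Z \<omega>" "Y \<omega>" \<tau> "Q (X \<omega>) (W \<omega>) 1" "Q (X \<omega>) (W \<omega>) 0"] by simp
    have OPT: "var_rv M (\<lambda>\<omega>. phi (E (X \<omega>)) (Q (X \<omega>) (W \<omega>) 1) (Q (X \<omega>) (W \<omega>) 0) (Z \<omega>) (Y \<omega>) \<tau>) \<le> var_rv M \<psi>"
      if "\<psi> \<in> borel_measurable M" "integrable M (\<lambda>\<omega>. (\<psi> \<omega>)\<^sup>2)" "G \<in> borel_measurable (MX \<Otimes>\<^sub>M MW)"
         "AE \<omega> in M. \<psi> \<omega> = phi (E (X \<omega>)) (Q (X \<omega>) (W \<omega>) 1) (Q (X \<omega>) (W \<omega>) 0) (Z \<omega>) (Y \<omega>) \<tau>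
                 + (Z \<omega> - E (X \<omega>)) * G (X \<omega>, W \<omega>)" for \<psi> G
      by (rule opt_lemma[OF M meas_X meas_W meas_Z Z_binary A2 mE Ecorr epos mY iY mQ CE' that(3) ps2 that(1,2,4)])
    have fpsW0: "Sigma_fps M (phi_W M eW QW X W Z Y Y0 Y1 \<delta>0) (\<alpha>0, 0)
        = var_rv M (\<lambda>\<omega>. phi (E (X \<omega>)) (Q (X \<omega>) (W \<omega>) 1) (Q (X \<omega>) (W \<omega>) 0) (Z \<omega>) (Y \<omega>) \<tau>)"
      unfolding Sigma_fps_def phs ..
    have C4: "Sigma_fps M (phi_W M eW QW X W Z Y Y0 Y1 \<delta>fps) (\<alpha>0, 0) \<le> Sigma_fps M (phi_X M eX QX X Z Y Y0 Y1 \<beta>fps) \<alpha>0"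
    proof -
      have "Sigma_fps M (phi_W M eW QW X W Z Y Y0 Y1 \<delta>fps) (\<alpha>0, 0) \<le> Sigma_fps M (phi_W M eW QW X W Z Y Y0 Y1 \<delta>0) (\<alpha>0, 0)"
        using min_Wfps by blast
      also have "\<dots> \<le> var_rv M (phi_X M eX QX X Z Y Y0 Y1 \<beta>fps \<alpha>0)"
        unfolding fpsW0
      proof (rule OPT[OF mphX _ mGs])
        show "integrable M (\<lambda>\<omega>. (phi_X M eX QX X Z Y Y0 Y1 \<beta>fps \<alpha>0 \<omega>)\<^sup>2)" using int_phiX by blast
        show "AE \<omega> in M. phi_X M eX QX X Z Y Y0 Y1 \<beta>fps \<alpha>0 \<omega> = phi (E (X \<omega>)) (Q (X \<omega>) (W \<omega>) 1) (Q (X \<omega>) (W \<omega>) 0) (Z \<omega>) (Y \<omega>) \<tau>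
                 + (Z \<omega> - E (X \<omega>)) * Gs \<beta>fps (X \<omega>, W \<omega>)"
          by (rule AE_I2) (rule shift)
      qed
      finally show ?thesis unfolding Sigma_fps_def .
    qed
    define a where "a = aX \<beta>eps"
    define \<psi> where "\<psi> = (\<lambda>\<omega>. phi_X M eX QX X Z Y Y0 Y1 \<beta>eps \<alpha>0 \<omega> - a \<bullet> score (ll_X eX X Z) \<alpha>0 \<omega>)"
    define G1 where "G1 = (\<lambda>p. Gs \<beta>eps p - (a \<bullet> gradient (eX (fst p)) \<alpha>0) / (E (fst p) * (1 - E (fst p))))"
    have mG1: "G1 \<in> borel_measurable (MX \<Otimes>\<^sub>M MW)" unfolding G1_def using mGs by measurable
    have m\<psi>: "\<psi> \<in> borel_measurable M" unfolding \<psi>_def using mphX mSX by measurable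
    have \<psi>2: "integrable M (\<lambda>\<omega>. (\<psi> \<omega>)\<^sup>2)"
    proof -
      have s2: "integrable M (\<lambda>\<omega>. (score (ll_X eX X Z) \<alpha>0 \<omega> \<bullet> a)\<^sup>2)"
        by (rule inner_sq_integrable[OF mSX int_SX])
      have "integrable M (\<lambda>\<omega>. (phi_X M eX QX X Z Y Y0 Y1 \<beta>eps \<alpha>0 \<omega> + (-1) * (score (ll_X eX X Z) \<alpha>0 \<omega> \<bullet> a))\<^sup>2)"
        by (rule l2_add[OF mphX _ _ l2_scale[OF s2]]) (use mSX int_phiX in auto)
      then show ?thesis unfolding \<psi>_def by (simp add: inner_commute)
    qed
    have ae\<psi>: "AE \<omega> in M. \<psi> \<omega> = phi (E (X \<omega>)) (Q (X \<omega>) (W \<omega>) 1) (Q (X \<omega>) (W \<omega>) 0) (Z \<omega>) (Y \<omega>) \<tau>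
                 + (Z \<omega> - E (X \<omega>)) * G1 (X \<omega>, W \<omega>)"
      using SXae epos
    proof eventually_elim
      case (elim \<omega>)
      then have Sw: "score (ll_X eX X Z) \<alpha>0 \<omega> = ((Z \<omega> - E (X \<omega>)) / (E (X \<omega>) * (1 - E (X \<omega>)))) *\<^sub>R gradient (eX (X \<omega>)) \<alpha>0"
        by simp
      show ?case unfolding \<psi>_def Sw G1_def shift[of \<beta>eps \<omega>]
        by (simp add: algebra_simps)
    qed
    have "Sigma_eps M (phi_W M eW QW X W Z Y Y0 Y1 \<delta>eps) (ll_W eW X W Z) (\<alpha>0, 0)
        \<le> Sigma_eps M (phi_W M eW QW X W Z Y Y0 Y1 \<delta>0) (ll_W eW X W Z) (\<alpha>0, 0)"
      using min_Weps by blast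
    also have "\<dots> \<le> Sigma_fps M (phi_W M eW QW X W Z Y Y0 Y1 \<delta>0) (\<alpha>0, 0)" by (rule epsfpsW)
    also have "\<dots> \<le> var_rv M \<psi>" unfolding fpsW0 by (rule OPT[OF m\<psi> \<psi>2 mG1 ae\<psi>])
    also have "\<dots> = Sigma_eps M (phi_X M eX QX X Z Y Y0 Y1 \<beta>eps) (ll_X eX X Z) \<alpha>0"
      unfolding epsX_rep \<psi>_def a_def ..
    finally show ?thesis using C4 by simp
  qed
  show ?thesis using C14 C2 C3 by blast
qed

end
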